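(* Let $s > 3/2$, $u_0 \in H^s(\mathbb{T})$, let $u$ be the corresponding unique solution of the periodic Fornberg–Whitham Cauchy problem $u_t + \frac{3}{2} u u_x = Q u_x$, $u(\cdot,0) = u_0$, and let $T \in \,]0,\infty]$ be its maximal life span. Then for every $t \in [0,T[$, $$\|u(t)\|_{L^2(\mathbb{T})} \leq e^{t}\, \|u_0\|_{L^2(\mathbb{T})}.$$
   Context: $\mathbb{T} = \mathbb{R}/\mathbb{Z}$ is the one-dimensional torus; functions on $\mathbb{T}$ are identified with $1$-periodic functions on $\mathbb{R}$, and $H^r(\mathbb{T})$ denotes the periodic Sobolev space. $Q := (\mathrm{id} - \partial_x^2)^{-1} \colon H^r(\mathbb{T}) \to H^{r+2}(\mathbb{T})$ acts on the spatial variable at each fixed time, and $u(t)$ denotes $x \mapsto u(x,t)$. It is known (well-posedness) that for $s>3/2$ and $u_0 \in H^s(\mathbb{T})$ there is $T_0>0$ such that the problem $u_t + \frac{3}{2}uu_x = Qu_x$, $u(x,0)=u_0(x)$ has a unique solution $u \in C([0,T_0],H^s(\mathbb{T})) \cap C^1([0,T_0],H^{s-1}(\mathbb{T}))$. The maximal life span $T$ is the supremum of all such $T_0$; $u$ is then defined on $[0,T[$. *)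

theory Defs
  imports "HOL-Analysis.Analysis"
begin

text \<open>Functions on the torus R/Z are 1-periodic real functions.\<close>
definition periodic1 :: "(real \<Rightarrow> real) \<Rightarrow> bool" where
  "periodic1 f \<longleftrightarrow> (\<forall>x. f (x + 1) = f x)"

definition in_L2T :: "(real \<Rightarrow> real) \<Rightarrow> bool" where
  "in_L2T f \<longleftrightarrow> periodic1 f \<and> f measurable_on {0..1} \<and> (\<lambda>x. (f x)^2) integrable_on {0..1}"

definition L2T_norm :: "(real \<Rightarrow> real) \<Rightarrow> real" where
  "L2T_norm f = sqrt (integral {0..1} (\<lambda>x. (f x)^2))"

definition fcoeff :: "(real \<Rightarrow> real) \<Rightarrow> int \<Rightarrow> complex" where
  "fcoeff f k = integral {0..1} (\<lambda>x. complex_of_real (f x) * cis (- 2 * pi * real_of_int k * x))"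

definition sob_weight :: "real \<Rightarrow> int \<Rightarrow> real" where
  "sob_weight r k = (1 + (2 * pi * real_of_int k)^2) powr r"

definition in_Hs :: "real \<Rightarrow> (real \<Rightarrow> real) \<Rightarrow> bool" where
  "in_Hs r f \<longleftrightarrow> in_L2T f \<and> (\<lambda>k. sob_weight r k * (cmod (fcoeff f k))^2) summable_on UNIV"

definition Hs_norm :: "real \<Rightarrow> (real \<Rightarrow> real) \<Rightarrow> real" where
  "Hs_norm r f = sqrt (\<Sum>\<^sub>\<infinity>k\<in>UNIV. sob_weight r k * (cmod (fcoeff f k))^2)"

definition Dx :: "(real \<Rightarrow> real) \<Rightarrow> (real \<Rightarrow> real)" where
  "Dx f = (SOME g. in_L2T g \<and> (\<forall>k. fcoeff g k = \<i> * complex_of_real (2 * pi * real_of_int k) * fcoeff f k))"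

text \<open>Q = (id - d_x^2)^{-1}, via Fourier multiplier 1/(1 + 4 pi^2 k^2).\<close>
definition Qop :: "(real \<Rightarrow> real) \<Rightarrow> (real \<Rightarrow> real)" where
  "Qop f = (SOME g. in_L2T g \<and> (\<forall>k. fcoeff g k = fcoeff f k / complex_of_real (1 + (2 * pi * real_of_int k)^2)))"

text \<open>u is a solution on [0,T0] in C([0,T0],H^s) \<inter> C^1([0,T0],H^(s-1)); u t x is u(x,t).\<close>
definition FW_solution :: "real \<Rightarrow> (real \<Rightarrow> real) \<Rightarrow> real \<Rightarrow> (real \<Rightarrow> real \<Rightarrow> real) \<Rightarrow> bool" where
  "FW_solution s u0 T0 u \<longleftrightarrow>
     u 0 = u0 \<and>
     (\<forall>t\<in>{0..T0}. in_Hs s (u t)) \<and>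
     (\<forall>t\<in>{0..T0}. ((\<lambda>\<tau>. Hs_norm s (\<lambda>x. u \<tau> x - u t x)) \<longlongrightarrow> 0) (at t within {0..T0})) \<and>
     (\<exists>w. (\<forall>t\<in>{0..T0}. in_Hs (s - 1) (w t)) \<and>
          (\<forall>t\<in>{0..T0}. ((\<lambda>h. Hs_norm (s - 1) (\<lambda>x. (u (t + h) x - u t x) / h - w t x)) \<longlongrightarrow> 0)
                           (at 0 within {h. t + h \<in> {0..T0}})) \<and>
          (\<forall>t\<in>{0..T0}. ((\<lambda>\<tau>. Hs_norm (s - 1) (\<lambda>x. w \<tau> x - w t x)) \<longlongrightarrow> 0) (at t within {0..T0})) \<and>
          (\<forall>t\<in>{0..T0}. AE x in lborel. w t x + 3 / 2 * u t x * Dx (u t) x = Qop (Dx (u t)) x))"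

definition life_span :: "real \<Rightarrow> (real \<Rightarrow> real) \<Rightarrow> ereal" where
  "life_span s u0 = Sup {ereal T0 | T0. T0 > 0 \<and> (\<exists>v. FW_solution s u0 T0 v)}"

end

theory Submission
  imports Defs "HOL-Analysis.Radon_Nikodym"
begin

definition ek :: "int \<Rightarrow> real \<Rightarrow> complex" where
  "ek k x = cis (2 * pi * real_of_int k * x)"

lemma ek_mult: "ek j x * ek k x = ek (j + k) x"
  unfolding ek_def by (simp add: cis_mult algebra_simps)

lemma norm_ek [simp]: "norm (ek k x) = 1"
  unfolding ek_def by simp

lemma ek_0 [simp]: "ek 0 x = 1"
  unfolding ek_def by simp

lemma ek_at0 [simp]: "ek k 0 = 1"
  unfolding ek_def by simp

lemma ek_at1 [simp]: "ek k 1 = 1"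
proof -
  have "ek k 1 = cis (2 * pi * real_of_int k)" unfolding ek_def by simp
  also have "\<dots> = 1" by (rule cis_multiple_2pi) simp
  finally show ?thesis .
qed

lemma ek_periodic: "ek k (x + 1) = ek k x"
proof -
  have "ek k (x + 1) = ek k x * cis (2 * pi * real_of_int k)"
    unfolding ek_def by (simp add: cis_mult algebra_simps)
  also have "cis (2 * pi * real_of_int k) = 1" by (rule cis_multiple_2pi) simp
  finally show ?thesis by simp
qed

lemma cnj_ek: "cnj (ek k x) = ek (-k) x"
  unfolding ek_def by (simp add: cis_cnj)

lemma continuous_on_ek [continuous_intros]: "continuous_on S (ek k)"
  unfolding ek_def by (intro continuous_intros)

lemma ek_has_vector_derivative:
  "(ek k has_vector_derivative (\<i> * complex_of_real (2 * pi * real_of_int k) * ek k x)) (at x within S)"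
  unfolding ek_def has_vector_derivative_def
  by (auto intro!: derivative_eq_intros simp: algebra_simps scaleR_conv_of_real)



lemma bilinear_ofreal_mult: "bilinear (\<lambda>(z::complex) (r::real). complex_of_real r * z)"
  unfolding bilinear_def
  by (auto intro!: linearI simp: algebra_simps scaleR_conv_of_real)

lemma abs_int_times_cont:
  fixes f :: "real \<Rightarrow> real" and G :: "real \<Rightarrow> complex"
  assumes f: "f absolutely_integrable_on S" and S: "S \<in> sets lebesgue"
    and G: "continuous_on S G" and B: "bounded (G ` S)"
  shows "(\<lambda>x. complex_of_real (f x) * G x) absolutely_integrable_on S"
  using absolutely_integrable_bounded_measurable_product[OF bilinear_ofreal_mult
      continuous_imp_measurable_on_sets_lebesgue[OF G S] S B f] by simp

lemma abs_int_times_ek: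
  fixes f :: "real \<Rightarrow> real"
  assumes f: "f absolutely_integrable_on {a..b}"
  shows "(\<lambda>x. complex_of_real (f x) * ek k x) absolutely_integrable_on {a..b}"
proof (rule abs_int_times_cont[OF f])
  show "bounded (ek k ` {a..b})"
    by (rule boundedI[where B=1]) auto
qed (auto intro: continuous_intros)

inductive tpoly :: "(complex \<Rightarrow> real) \<Rightarrow> bool" where
  tp_const: "tpoly (\<lambda>z. c)"
| tp_re: "tpoly Re"
| tp_im: "tpoly Im"
| tp_add: "tpoly f \<Longrightarrow> tpoly g \<Longrightarrow> tpoly (\<lambda>z. f z + g z)"
| tp_mult: "tpoly f \<Longrightarrow> tpoly g \<Longrightarrow> tpoly (\<lambda>z. f z * g z)"

definition tpl :: "(complex \<times> int) list \<Rightarrow> real \<Rightarrow> complex" where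
  "tpl L x = sum_list (map (\<lambda>(c, k). c * ek k x) L)"

definition prodL :: "(complex \<times> int) list \<Rightarrow> (complex \<times> int) list \<Rightarrow> (complex \<times> int) list" where
  "prodL L1 L2 = concat (map (\<lambda>(c, j). map (\<lambda>(d, k). (c * d, j + k)) L2) L1)"

lemma tpl_Nil [simp]: "tpl [] x = 0" by (simp add: tpl_def)
lemma tpl_Cons [simp]: "tpl (p # L) x = fst p * ek (snd p) x + tpl L x"
  by (cases p) (simp add: tpl_def)
lemma tpl_append [simp]: "tpl (L1 @ L2) x = tpl L1 x + tpl L2 x"
  by (simp add: tpl_def)

lemma tpl_map_shift: "tpl (map (\<lambda>(d, k). (c * d, j + k)) L) x = c * ek j x * tpl L x"
  by (induction L) (auto simp: algebra_simps ek_mult[symmetric])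

lemma tpl_prodL: "tpl (prodL L1 L2) x = tpl L1 x * tpl L2 x"
proof (induction L1)
  case Nil then show ?case by (simp add: prodL_def)
next
  case (Cons p L1)
  obtain c j where p: "p = (c, j)" by (cases p)
  have "prodL (p # L1) L2 = map (\<lambda>(d, k). (c * d, j + k)) L2 @ prodL L1 L2"
    by (simp add: prodL_def p)
  then have "tpl (prodL (p # L1) L2) x = c * ek j x * tpl L2 x + tpl L1 x * tpl L2 x"
    using Cons by (simp only: tpl_append tpl_map_shift)
  then show ?case by (simp add: p algebra_simps)
qed

lemma tpoly_repr: "tpoly \<psi> \<Longrightarrow> \<exists>L. \<forall>x. complex_of_real (\<psi> (ek 1 x)) = tpl L x"
proof (induction rule: tpoly.induct)
  case (tp_const c)
  show ?case by (rule exI[where x="[(complex_of_real c, 0)]"]) simp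
next
  case tp_re
  show ?case
  proof (rule exI[where x="[(1/2, 1), (1/2, -1)]"], intro allI)
    fix x
    have "ek (-1) x = cnj (ek 1 x)" by (simp add: cnj_ek)
    then show "complex_of_real (Re (ek 1 x)) = tpl [(1/2, 1), (1/2, -1)] x"
      using complex_add_cnj[of "ek 1 x"] by (simp add: field_simps)
  qed
next
  case tp_im
  show ?case
  proof (rule exI[where x="[(-\<i>/2, 1), (\<i>/2, -1)]"], intro allI)
    fix x
    have "ek (-1) x = cnj (ek 1 x)" by (simp add: cnj_ek)
    then have "tpl [(-\<i>/2, 1), (\<i>/2, -1)] x = -\<i>/2 * (ek 1 x - cnj (ek 1 x))"
      by (simp add: algebra_simps)
    also have "\<dots> = complex_of_real (Im (ek 1 x))"
      by (simp add: complex_diff_cnj complex_eq_iff)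
    finally show "complex_of_real (Im (ek 1 x)) = tpl [(-\<i>/2, 1), (\<i>/2, -1)] x" by simp
  qed
next
  case (tp_add f g)
  then obtain L1 L2 where "\<forall>x. complex_of_real (f (ek 1 x)) = tpl L1 x"
    "\<forall>x. complex_of_real (g (ek 1 x)) = tpl L2 x" by blast
  then show ?case by (intro exI[where x="L1 @ L2"]) simp
next
  case (tp_mult f g)
  then obtain L1 L2 where "\<forall>x. complex_of_real (f (ek 1 x)) = tpl L1 x"
    "\<forall>x. complex_of_real (g (ek 1 x)) = tpl L2 x" by blast
  then show ?case by (intro exI[where x="prodL L1 L2"]) (simp add: tpl_prodL)
qed

lemma tpoly_cont: "tpoly \<psi> \<Longrightarrow> continuous_on S \<psi>"
  by (induction rule: tpoly.induct) (auto intro!: continuous_intros)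

lemma integral_tpl_zero:
  fixes f :: "real \<Rightarrow> real"
  assumes f: "f absolutely_integrable_on {0..1}"
    and z: "\<And>k. integral {0..1} (\<lambda>x. complex_of_real (f x) * ek k x) = 0"
  shows "integral {0..1} (\<lambda>x. complex_of_real (f x) * tpl L x) = 0"
    "(\<lambda>x. complex_of_real (f x) * tpl L x) integrable_on {0..1}"
proof (induction L)
  case Nil
  { case 1 show ?case by simp }
  { case 2 show ?case by (simp add: integrable_0) }
next
  case (Cons p L)
  have i1: "(\<lambda>x. fst p * (complex_of_real (f x) * ek (snd p) x)) integrable_on {0..1}"
    using abs_int_times_ek[OF f] integrable_on_mult_right absolutely_integrable_on_def by blast
  have eq: "(\<lambda>x. complex_of_real (f x) * tpl (p # L) x) =
     (\<lambda>x. fst p * (complex_of_real (f x) * ek (snd p) x) + complex_of_real (f x) * tpl L x)"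
    by (auto simp: algebra_simps)
  { case 1 show ?case unfolding eq
      by (subst integral_add[OF i1 Cons(2)]) (simp add: integral_mult_right z Cons(1)) }
  { case 2 show ?case unfolding eq by (rule integrable_add[OF i1 Cons(2)]) }
qed



lemma abs_int_times_cont_real:
  fixes f g :: "real \<Rightarrow> real"
  assumes f: "f absolutely_integrable_on {a..b}" and g: "continuous_on {a..b} g"
  shows "(\<lambda>x. f x * g x) absolutely_integrable_on {a..b}"
proof -
  have "bounded (g ` {a..b})"
    by (intro compact_imp_bounded compact_continuous_image g) auto
  from absolutely_integrable_bounded_measurable_product_real[OF
      continuous_imp_measurable_on_sets_lebesgue[OF g] _ this f]
  show ?thesis by (simp add: mult.commute)
qed

lemma of_real_integral:
  fixes g :: "real \<Rightarrow> real"
  assumes "g integrable_on S"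
  shows "complex_of_real (integral S g) = integral S (\<lambda>x. complex_of_real (g x))"
proof -
  have "integral S (of_real \<circ> g) = (of_real (integral S g) :: complex)"
    by (rule integral_linear[OF assms bounded_linear_of_real])
  then show ?thesis unfolding o_def by (rule sym)
qed

lemma ek1_sphere: "ek 1 x \<in> sphere 0 1"
  by simp

lemma tpoly_integral_zero:
  fixes f :: "real \<Rightarrow> real"
  assumes f: "f absolutely_integrable_on {0..1}"
    and z: "\<And>k. integral {0..1} (\<lambda>x. complex_of_real (f x) * ek k x) = 0"
    and p: "tpoly p"
  shows "integral {0..1} (\<lambda>x. f x * p (ek 1 x)) = 0"
proof -
  obtain L where L: "\<And>x. complex_of_real (p (ek 1 x)) = tpl L x"
    using tpoly_repr[OF p] by blast
  have cp: "continuous_on {0..1} (\<lambda>x. p (ek 1 x))"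
    by (rule continuous_on_compose2[OF tpoly_cont[OF p] continuous_on_ek]) auto
  have int: "(\<lambda>x. f x * p (ek 1 x)) integrable_on {0..1}"
    using abs_int_times_cont_real[OF f cp] absolutely_integrable_on_def by blast
  have "complex_of_real (integral {0..1} (\<lambda>x. f x * p (ek 1 x)))
      = integral {0..1} (\<lambda>x. complex_of_real (f x) * tpl L x)"
    by (subst of_real_integral[OF int]) (simp add: L[symmetric])
  also have "\<dots> = 0" by (rule integral_tpl_zero(1)[OF f z])
  finally show ?thesis by simp
qed

lemma sw_zero:
  fixes f :: "real \<Rightarrow> real"
  assumes f: "f absolutely_integrable_on {0..1}"
    and z: "\<And>k. integral {0..1} (\<lambda>x. complex_of_real (f x) * ek k x) = 0"
    and \<psi>: "continuous_on (sphere 0 1) \<psi>"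
  shows "integral {0..1} (\<lambda>x. f x * \<psi> (ek 1 x)) = 0"
proof -
  let ?I = "integral {0..1} (\<lambda>x. f x * \<psi> (ek 1 x))"
  have c\<psi>: "continuous_on {0..1} (\<lambda>x. \<psi> (ek 1 x))"
    by (rule continuous_on_compose2[OF \<psi> continuous_on_ek]) auto
  have intf: "(\<lambda>x. \<bar>f x\<bar>) integrable_on {0..1}"
    using f by (simp add: absolutely_integrable_on_def)
  have "\<bar>?I\<bar> \<le> e * integral {0..1} (\<lambda>x. \<bar>f x\<bar>)" if e: "e > 0" for e
  proof -
    have "\<exists>g. tpoly g \<and> (\<forall>x\<in>sphere 0 1. \<bar>\<psi> x - g x\<bar> < e)"
    proof (rule Stone_Weierstrass_HOL[of "sphere 0 1" tpoly \<psi> e])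
      show "\<And>x y. x \<in> sphere 0 1 \<and> y \<in> sphere 0 1 \<and> x \<noteq> y \<Longrightarrow> \<exists>f. tpoly f \<and> f x \<noteq> f y"
        by (metis complex_eq_iff tp_im tp_re)
    qed (auto intro: tpoly.intros tpoly_cont \<psi> e)
    then obtain p where p: "tpoly p" and pe: "\<And>x. x \<in> sphere 0 1 \<Longrightarrow> \<bar>\<psi> x - p x\<bar> < e"
      by blast
    have cp: "continuous_on {0..1} (\<lambda>x. p (ek 1 x))"
      by (rule continuous_on_compose2[OF tpoly_cont[OF p] continuous_on_ek]) auto
    have i1: "(\<lambda>x. f x * \<psi> (ek 1 x)) integrable_on {0..1}"
      using abs_int_times_cont_real[OF f c\<psi>] absolutely_integrable_on_def by blast
    have i2: "(\<lambda>x. f x * p (ek 1 x)) integrable_on {0..1}"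
      using abs_int_times_cont_real[OF f cp] absolutely_integrable_on_def by blast
    have "?I = ?I - integral {0..1} (\<lambda>x. f x * p (ek 1 x))"
      using tpoly_integral_zero[OF f z p] by simp
    also have "\<dots> = integral {0..1} (\<lambda>x. f x * (\<psi> (ek 1 x) - p (ek 1 x)))"
      by (subst integral_diff[OF i1 i2, symmetric]) (simp add: algebra_simps)
    finally have eq: "?I = integral {0..1} (\<lambda>x. f x * (\<psi> (ek 1 x) - p (ek 1 x)))" .
    have "norm (integral {0..1} (\<lambda>x. f x * (\<psi> (ek 1 x) - p (ek 1 x))))
        \<le> integral {0..1} (\<lambda>x. e * \<bar>f x\<bar>)"
    proof (rule integral_norm_bound_integral)
      show "(\<lambda>x. f x * (\<psi> (ek 1 x) - p (ek 1 x))) integrable_on {0..1}"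
        using integrable_diff[OF i1 i2] by (simp add: algebra_simps)
      show "(\<lambda>x. e * \<bar>f x\<bar>) integrable_on {0..1}"
        using integrable_on_mult_right[OF intf] .
      show "norm (f x * (\<psi> (ek 1 x) - p (ek 1 x))) \<le> e * \<bar>f x\<bar>" if "x \<in> {0..1}" for x
      proof -
        have "\<bar>\<psi> (ek 1 x) - p (ek 1 x)\<bar> \<le> e" using pe[OF ek1_sphere, of x] by simp
        then have "\<bar>f x\<bar> * \<bar>\<psi> (ek 1 x) - p (ek 1 x)\<bar> \<le> \<bar>f x\<bar> * e" by (rule mult_left_mono) simp
        then show ?thesis by (simp add: abs_mult mult.commute)
      qed
    qed
    then show ?thesis using eq by simp
  qed
  moreover have "integral {0..1} (\<lambda>x. \<bar>f x\<bar>) \<ge> 0"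
    by (rule integral_nonneg[OF intf]) auto
  ultimately have "\<bar>?I\<bar> \<le> 0"
  proof -
    assume h: "\<And>e. e > 0 \<Longrightarrow> \<bar>?I\<bar> \<le> e * integral {0..1} (\<lambda>x. \<bar>f x\<bar>)"
    assume nn: "integral {0..1} (\<lambda>x. \<bar>f x\<bar>) \<ge> 0"
    show ?thesis
    proof (rule field_le_epsilon)
      fix d :: real assume d: "d > 0"
      have "\<bar>?I\<bar> \<le> (d / (integral {0..1} (\<lambda>x. \<bar>f x\<bar>) + 1)) * integral {0..1} (\<lambda>x. \<bar>f x\<bar>)"
        using h[of "d / (integral {0..1} (\<lambda>x. \<bar>f x\<bar>) + 1)"] d nn by simp
      also have "\<dots> \<le> d" using d nn by (simp add: field_simps)
      finally show "\<bar>?I\<bar> \<le> 0 + d" by simp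
    qed
  qed
  then show ?thesis by simp
qed



lemma ek1_surj: "ek 1 ` {0..1} = sphere 0 1"
proof
  show "ek 1 ` {0..1} \<subseteq> sphere 0 1" by auto
  show "sphere 0 1 \<subseteq> ek 1 ` {0..1}"
  proof
    fix z :: complex assume z: "z \<in> sphere 0 1"
    then have nz: "z \<noteq> 0" and nrm: "norm z = 1" by auto
    have sg: "sgn z = z" using nrm by (simp add: sgn_div_norm)
    from Arg_correct[OF nz] have c: "z = cis (Arg z)" and a: "- pi < Arg z" "Arg z \<le> pi"
      using sg by auto
    show "z \<in> ek 1 ` {0..1}"
    proof (cases "Arg z \<ge> 0")
      case True
      have "ek 1 (Arg z / (2 * pi)) = z" unfolding ek_def using c by simp
      moreover have "Arg z / (2 * pi) \<in> {0..1}" using True a by (auto simp: field_simps)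
      ultimately show ?thesis by (metis imageI)
    next
      case False
      have "ek 1 (Arg z / (2 * pi) + 1) = z"
        using ek_periodic[of 1 "Arg z / (2 * pi)"] unfolding ek_def using c by simp
      moreover have "Arg z / (2 * pi) + 1 \<in> {0..1}" using False a by (auto simp: field_simps)
      ultimately show ?thesis by (metis imageI)
    qed
  qed
qed

lemma ek1_fiber:
  assumes x: "x \<in> {0..1}" and y: "y \<in> {0..1}" and e: "ek 1 x = ek 1 y"
  shows "x = y \<or> (x = 0 \<and> y = 1) \<or> (x = 1 \<and> y = 0)"
proof -
  from e have "cos (2 * pi * x) = cos (2 * pi * y) \<and> sin (2 * pi * x) = sin (2 * pi * y)"
    unfolding ek_def by (metis cis.sel(1) cis.sel(2) of_int_1 mult.right_neutral)
  then have "sin (2 * pi * x) = sin (2 * pi * y) \<and> cos (2 * pi * x) = cos (2 * pi * y)" by simp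
  then obtain n :: int where n: "2 * pi * x = 2 * pi * y + 2 * pi * real_of_int n"
    using sin_cos_eq_iff by blast
  then have "2 * pi * x = 2 * pi * (y + real_of_int n)" by (simp add: distrib_left)
  then have "x = y + real_of_int n" by simp
  then have "real_of_int n \<le> 1" "real_of_int n \<ge> -1" using x y by auto
  then have "n \<le> 1" "n \<ge> -1" by linarith+
  then have "n \<in> {-1, 0, 1}" by auto
  then show ?thesis using \<open>x = y + real_of_int n\<close> x y by auto
qed

lemma circle_lift:
  fixes \<phi> :: "real \<Rightarrow> real"
  assumes c: "continuous_on {0..1} \<phi>" and p: "\<phi> 0 = \<phi> 1"
  shows "\<exists>\<psi>. continuous_on (sphere 0 1) \<psi> \<and> (\<forall>x\<in>{0..1}. \<psi> (ek 1 x) = \<phi> x)"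
proof -
  define \<psi> where "\<psi> z = \<phi> (SOME x. x \<in> {0..1} \<and> ek 1 x = z)" for z
  have eq: "\<psi> (ek 1 x) = \<phi> x" if x: "x \<in> {0..1}" for x
  proof -
    have "\<exists>y. y \<in> {0..1} \<and> ek 1 y = ek 1 x" using x by blast
    then have s: "(SOME y. y \<in> {0..1} \<and> ek 1 y = ek 1 x) \<in> {0..1} \<and>
        ek 1 (SOME y. y \<in> {0..1} \<and> ek 1 y = ek 1 x) = ek 1 x"
      by (rule someI_ex)
    then show ?thesis unfolding \<psi>_def using ek1_fiber[OF _ x, of "SOME y. y \<in> {0..1} \<and> ek 1 y = ek 1 x"] p
      by auto
  qed
  have q: "quotient_map (top_of_set {0..1}) (top_of_set (sphere 0 1)) (ek 1)"
  proof (rule continuous_imp_quotient_map)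
    show "continuous_map (top_of_set {0..1}) (top_of_set (sphere 0 1)) (ek 1)"
      by (auto simp: continuous_map_subtopology_eu intro: continuous_intros)
    show "compact_space (top_of_set {0..1::real})"
      by (simp add: compact_space_subtopology)
    show "Hausdorff_space (top_of_set (sphere (0::complex) 1))"
      by (rule Hausdorff_space_subtopology) simp
    show "ek 1 ` topspace (top_of_set {0..1}) = topspace (top_of_set (sphere 0 1))"
      using ek1_surj by simp
  qed
  have "continuous_map (top_of_set {0..1}) euclideanreal (\<psi> \<circ> ek 1)"
    unfolding continuous_map_iff_continuous
    by (rule continuous_on_eq[OF c]) (simp add: eq)
  then have "continuous_map (top_of_set (sphere 0 1)) euclideanreal \<psi>"
    by (rule continuous_compose_quotient_map[OF q])
  then show ?thesis using eq by (auto simp: continuous_map_iff_continuous)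
qed

lemma cont_zero:
  fixes f :: "real \<Rightarrow> real"
  assumes f: "f absolutely_integrable_on {0..1}"
    and z: "\<And>k. integral {0..1} (\<lambda>x. complex_of_real (f x) * ek k x) = 0"
    and c: "continuous_on {0..1} \<phi>" and p: "\<phi> 0 = \<phi> 1"
  shows "integral {0..1} (\<lambda>x. f x * \<phi> x) = 0"
proof -
  obtain \<psi> where \<psi>: "continuous_on (sphere 0 1) \<psi>" "\<And>x. x \<in> {0..1} \<Longrightarrow> \<psi> (ek 1 x) = \<phi> x"
    using circle_lift[OF c p] by blast
  have "integral {0..1} (\<lambda>x. f x * \<phi> x) = integral {0..1} (\<lambda>x. f x * \<psi> (ek 1 x))"
    by (rule integral_cong) (simp add: \<psi>)
  also have "\<dots> = 0" by (rule sw_zero[OF f z \<psi>(1)])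
  finally show ?thesis .
qed



definition ramp :: "real \<Rightarrow> nat \<Rightarrow> real \<Rightarrow> real" where
  "ramp a n x = max 0 (min 1 (min (real (Suc n) * (x - a)) (real (Suc n) * (1 - x))))"

lemma ramp_cont: "continuous_on S (ramp a n)"
  unfolding ramp_def by (intro continuous_intros)

lemma ramp_bounds: "0 \<le> ramp a n x" "ramp a n x \<le> 1"
  unfolding ramp_def by auto

lemma ramp_limit:
  assumes x: "x \<in> {0..1}" and a: "0 \<le> a" "a \<le> 1"
  shows "(\<lambda>n. ramp a n x) \<longlonglongrightarrow> (if a < x \<and> x < 1 then 1 else 0)"
proof (cases "a < x \<and> x < 1")
  case True
  obtain N :: nat where N: "1 / (x - a) + 1 / (1 - x) < real N"
    using reals_Archimedean2 by blast
  have "eventually (\<lambda>n. ramp a n x = 1) sequentially"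
  proof (rule eventually_sequentiallyI[of N])
    fix n assume n: "N \<le> n"
    have p1: "0 < 1 / (x - a)" "0 < 1 / (1 - x)" using True by auto
    have "real N \<le> real n" using n by simp
    then have "1 / (x - a) < real (Suc n)" "1 / (1 - x) < real (Suc n)"
      using N p1 by linarith+
    then have "1 < real (Suc n) * (x - a)" "1 < real (Suc n) * (1 - x)"
      using True by (simp_all add: pos_divide_less_eq mult.commute)
    then have "1 \<le> real (Suc n) * (x - a)" "1 \<le> real (Suc n) * (1 - x)"
      by simp_all
    then show "ramp a n x = 1" unfolding ramp_def by simp
  qed
  then show ?thesis using True by (simp add: tendsto_eventually)
next
  case False
  have "ramp a n x = 0" for n
  proof (cases "x \<le> a")
    case True
    then have "real (Suc n) * (x - a) \<le> 0" by (simp add: mult_nonneg_nonpos)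
    then show ?thesis unfolding ramp_def by simp
  next
    case False
    with \<open>\<not> (a < x \<and> x < 1)\<close> x have "x = 1" by auto
    then show ?thesis unfolding ramp_def using a by simp
  qed
  moreover have "(if a < x \<and> x < 1 then 1 else 0) = (0::real)" using False by simp
  ultimately show ?thesis by simp
qed

lemma interval_zero:
  fixes f :: "real \<Rightarrow> real"
  assumes f: "f absolutely_integrable_on {0..1}"
    and z: "\<And>k. integral {0..1} (\<lambda>x. complex_of_real (f x) * ek k x) = 0"
    and a: "0 \<le> a" "a \<le> 1"
  shows "integral {0..1} (\<lambda>x. f x * (if a < x \<and> x < 1 then 1 else 0)) = 0"
    "(\<lambda>x. f x * (if a < x \<and> x < 1 then 1 else 0)) integrable_on {0..1}"
proof -
  have r0: "ramp a n 0 = ramp a n 1" for n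
  proof -
    have h1: "real (Suc n) * (0 - a) \<le> 0" using a by (simp add: mult_nonneg_nonpos)
    have h2: "real (Suc n) * (1 - a) \<ge> 0" using a by simp
    have "ramp a n 0 = 0" unfolding ramp_def using h1 by (smt (verit))
    moreover have "ramp a n 1 = 0" unfolding ramp_def using h2 by simp
    ultimately show ?thesis by simp
  qed
  have intf: "(\<lambda>x. \<bar>f x\<bar>) integrable_on {0..1}"
    using f by (simp add: absolutely_integrable_on_def)
  have ints: "(\<lambda>x. f x * ramp a n x) integrable_on {0..1}" for n
    using abs_int_times_cont_real[OF f ramp_cont] absolutely_integrable_on_def by blast
  have dc: "(\<lambda>n. integral {0..1} (\<lambda>x. f x * ramp a n x)) \<longlonglongrightarrow>
      integral {0..1} (\<lambda>x. f x * (if a < x \<and> x < 1 then 1 else 0))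
    \<and> (\<lambda>x. f x * (if a < x \<and> x < 1 then 1 else 0)) integrable_on {0..1}"
  proof (rule conjI[rotated], rule dominated_convergence(1)[OF ints intf], rule_tac[3] dominated_convergence(2)[OF ints intf])
    show "norm (f x * ramp a n x) \<le> \<bar>f x\<bar>" for n x
      using ramp_bounds[of a n x] by (simp add: abs_mult mult_left_le)
    show "norm (f x * ramp a n x) \<le> \<bar>f x\<bar>" for n x
      using ramp_bounds[of a n x] by (simp add: abs_mult mult_left_le)
    show "(\<lambda>n. f x * ramp a n x) \<longlonglongrightarrow> f x * (if a < x \<and> x < 1 then 1 else 0)"
      if "x \<in> {0..1}" for x
      by (intro tendsto_mult tendsto_const ramp_limit[OF that a])
    show "(\<lambda>n. f x * ramp a n x) \<longlonglongrightarrow> f x * (if a < x \<and> x < 1 then 1 else 0)"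
      if "x \<in> {0..1}" for x
      by (intro tendsto_mult tendsto_const ramp_limit[OF that a])
  qed
  have "integral {0..1} (\<lambda>x. f x * ramp a n x) = 0" for n
    by (rule cont_zero[OF f z ramp_cont r0])
  then show "integral {0..1} (\<lambda>x. f x * (if a < x \<and> x < 1 then 1 else 0)) = 0"
    using dc LIMSEQ_unique by (simp add: LIMSEQ_const_iff)
  show "(\<lambda>x. f x * (if a < x \<and> x < 1 then 1 else 0)) integrable_on {0..1}" using dc by simp
qed



lemma meas_zero:
  fixes G :: "real \<Rightarrow> real"
  assumes Gb[measurable]: "G \<in> borel_measurable borel"
    and Gi: "integrable lborel G"
    and z: "\<And>a. (LINT x|lborel. indicator {a<..} x * G x) = 0"
  shows "AE x in lborel. G x = 0"
proof -
  define P where "P x = max 0 (G x)" for x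
  define N where "N x = max 0 (- G x)" for x
  have [measurable]: "P \<in> borel_measurable borel" "N \<in> borel_measurable borel"
    unfolding P_def N_def by measurable
  have Pi: "integrable lborel P" unfolding P_def by (intro integrable_max Gi) simp
  have Ni: "integrable lborel N" unfolding N_def by (intro integrable_max integrable_minus Gi) simp
  have PiA: "integrable lborel (\<lambda>x. P x * indicator A x)" if "A \<in> sets borel" for A
    using integrable_mult_indicator[of A lborel P] that Pi by (simp add: mult.commute)
  have NiA: "integrable lborel (\<lambda>x. N x * indicator A x)" if "A \<in> sets borel" for A
    using integrable_mult_indicator[of A lborel N] that Ni by (simp add: mult.commute)
  have em: "emeasure (density lborel (\<lambda>x. ennreal (Q x))) A = ennreal (LINT x|lborel. Q x * indicator A x)"
    if Qb: "Q \<in> borel_measurable borel" and Qn: "\<And>x. Q x \<ge> 0"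
      and QiA: "integrable lborel (\<lambda>x. Q x * indicator A x)" and A: "A \<in> sets borel" for Q A
  proof -
    have "emeasure (density lborel (\<lambda>x. ennreal (Q x))) A = (\<integral>\<^sup>+x. ennreal (Q x) * indicator A x \<partial>lborel)"
      using Qb A by (subst emeasure_density) auto
    also have "\<dots> = (\<integral>\<^sup>+x. ennreal (Q x * indicator A x) \<partial>lborel)"
      by (intro nn_integral_cong) (auto split: split_indicator)
    also have "\<dots> = ennreal (LINT x|lborel. Q x * indicator A x)"
      using QiA Qn by (intro nn_integral_eq_integral) (auto split: split_indicator)
    finally show ?thesis .
  qed
  have dens: "density lborel (\<lambda>x. ennreal (P x)) = density lborel (\<lambda>x. ennreal (N x))"
  proof (rule measure_eqI_lessThan)
    show "sets (density lborel (\<lambda>x. ennreal (P x))) = sets borel" by simp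
    show "sets (density lborel (\<lambda>x. ennreal (N x))) = sets borel" by simp
    show "emeasure (density lborel (\<lambda>x. ennreal (P x))) {x<..} < \<infinity>" for x
      using em[of P "{x<..}"] PiA[of "{x<..}"] by (simp add: P_def)
    show "emeasure (density lborel (\<lambda>x. ennreal (P x))) {x<..} =
          emeasure (density lborel (\<lambda>x. ennreal (N x))) {x<..}" for x
    proof -
      have "(LINT y|lborel. P y * indicator {x<..} y) - (LINT y|lborel. N y * indicator {x<..} y)
          = (LINT y|lborel. indicator {x<..} y * G y)"
        by (subst Bochner_Integration.integral_diff[OF PiA NiA, symmetric]) (auto intro!: Bochner_Integration.integral_cong simp: P_def N_def split: split_indicator)
      then have "(LINT y|lborel. P y * indicator {x<..} y) = (LINT y|lborel. N y * indicator {x<..} y)"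
        using z[of x] by simp
      then show ?thesis
        using em[of P "{x<..}"] em[of N "{x<..}"] PiA[of "{x<..}"] NiA[of "{x<..}"]
        by (simp add: P_def N_def)
    qed
  qed

  have "AE x in lborel. ennreal (P x) = ennreal (N x)"
    by (rule sigma_finite_measure.density_unique[OF sigma_finite_lborel _ _ dens]) auto
  then show ?thesis
    by eventually_elim (auto simp: P_def N_def max_def split: if_splits)
qed



lemma uniqueness:
  fixes f :: "real \<Rightarrow> real"
  assumes f: "f absolutely_integrable_on {0..1}"
    and z: "\<And>k. integral {0..1} (\<lambda>x. complex_of_real (f x) * ek k x) = 0"
  shows "negligible {x\<in>{0..1}. f x \<noteq> 0}"
proof -
  define F where "F x = indicator {0..1} x * f x" for x :: real
  have Fi: "integrable lebesgue F"
    using f unfolding set_integrable_def F_def by simp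
  have fi: "f integrable_on {0..1}" using f absolutely_integrable_on_def by blast
  have int0: "integral {0..1} f = 0"
  proof -
    have "complex_of_real (integral {0..1} f) = integral {0..1} (\<lambda>x. complex_of_real (f x) * ek 0 x)"
      by (simp add: of_real_integral[OF fi])
    then show ?thesis using z[of 0] by simp
  qed
  have Feq: "F = (\<lambda>x. if x \<in> {0..1} then f x else 0)"
    unfolding F_def by (auto simp: indicator_def)
  have hk: "((\<lambda>x. indicator {a<..} x * F x) has_integral 0) UNIV" for a
  proof (cases "a < 0")
    case True
    have "(F has_integral 0) UNIV"
      unfolding Feq using fi int0 has_integral_restrict_UNIV[of "{0..1}" f] integrable_integral[OF fi]
      by simp
    moreover have "(\<lambda>x. indicator {a<..} x * F x) = F"
      using True unfolding F_def by (auto simp: indicator_def)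
    ultimately show ?thesis by simp
  next
    case False
    show ?thesis
    proof (cases "a \<ge> 1")
      case True
      have "(\<lambda>x. indicator {a<..} x * F x) = (\<lambda>x. 0)"
        using True unfolding F_def by (auto simp: indicator_def)
      then show ?thesis by simp
    next
      case False2: False
      have a: "0 \<le> a" "a \<le> 1" using False False2 by auto
      let ?g = "\<lambda>x. f x * (if a < x \<and> x < 1 then 1 else 0)"
      have "(?g has_integral 0) {0..1}"
        using interval_zero[OF f z a] integrable_integral by fastforce
      then have "((\<lambda>x. if x \<in> {0..1} then ?g x else 0) has_integral 0) UNIV"
        by (simp only: has_integral_restrict_UNIV)
      then show ?thesis
        by (rule has_integral_spike[OF negligible_sing[of 1], rotated]) (auto simp: F_def indicator_def)
    qed
  qed
  have Fb: "F \<in> borel_measurable (completion lborel)"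
    using Fi by (simp add: borel_measurable_integrable)
  obtain G where Gb: "G \<in> borel_measurable lborel" and FG: "AE x in lborel. F x = G x"
    using completion_ex_borel_measurable_real[OF Fb] by blast
  obtain N where N: "N \<in> null_sets lborel" "{x \<in> space lborel. \<not> F x = G x} \<subseteq> N"
    using FG by (force simp: eventually_ae_filter)
  have negN: "negligible N"
    using N(1) by (simp add: negligible_iff_null_sets null_sets_completionI)
  have FGae: "AE x in lebesgue. F x = G x"
    using FG by (rule AE_completion)
  have Gi: "integrable lborel G"
  proof -
    have "integrable lebesgue G" using integrable_cong_AE[OF _ _ FGae] Fi Gb
      by (metis (mono_tags, lifting) FGae Fi integrable_cong_AE_imp measurable_completion)
    then show ?thesis using Gb by (simp add: integrable_completion)
  qed
  have Gz: "(LINT x|lborel. indicator {a<..} x * G x) = 0" for a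
  proof -
    have i: "integrable lborel (\<lambda>x. indicator {a<..} x * G x)"
      using integrable_mult_indicator[of "{a<..}" lborel G] Gi by simp
    have "((\<lambda>x. indicator {a<..} x * G x) has_integral 0) UNIV"
    proof (rule has_integral_spike[OF negN _ hk[of a]])
      fix x assume "x \<in> UNIV - N"
      then have "F x = G x" using N(2) by auto
      then show "indicator {a<..} x * G x = indicator {a<..} x * F x" by simp
    qed
    then show ?thesis using has_integral_integral_lborel[OF i] has_integral_unique by blast
  qed
  have "AE x in lborel. G x = 0"
    by (rule meas_zero[OF _ Gi Gz]) (use Gb in simp)
  with FG have "AE x in lborel. F x = 0" by eventually_elim simp
  then obtain N2 where N2: "N2 \<in> null_sets lborel" "{x \<in> space lborel. \<not> F x = 0} \<subseteq> N2"
    by (force simp: eventually_ae_filter)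
  have "negligible N2"
    using N2(1) by (simp add: negligible_iff_null_sets null_sets_completionI)
  moreover have "{x\<in>{0..1}. f x \<noteq> 0} \<subseteq> N2"
    using N2(2) unfolding F_def by auto
  ultimately show ?thesis by (rule negligible_subset)
qed



definition Wc :: "(int \<Rightarrow> complex) \<Rightarrow> real \<Rightarrow> complex" where
  "Wc c x = (\<Sum>\<^sub>\<infinity>k. c k * ek k x)"

lemma Wc_unif:
  assumes c: "(\<lambda>k. norm (c k)) summable_on UNIV"
  shows "uniform_limit S (\<lambda>F x. \<Sum>k\<in>F. c k * ek k x) (Wc c) (finite_subsets_at_top UNIV)"
  unfolding Wc_def
  by (rule Weierstrass_m_test_general[OF _ c]) (simp add: norm_mult)

lemma Wc_cont:
  assumes c: "(\<lambda>k. norm (c k)) summable_on UNIV"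
  shows "continuous_on S (Wc c)"
proof (rule uniform_limit_theorem[OF _ Wc_unif[OF c]])
  show "\<forall>\<^sub>F n in finite_subsets_at_top UNIV. continuous_on S (\<lambda>x. \<Sum>k\<in>n. c k * ek k x)"
    by (intro always_eventually allI continuous_intros)
qed (rule finite_subsets_at_top_neq_bot)

lemma Wc_summable:
  assumes c: "(\<lambda>k. norm (c k)) summable_on UNIV"
  shows "(\<lambda>k. c k * ek k x) summable_on UNIV"
proof -
  have "(\<lambda>k. norm (c k * ek k x)) summable_on UNIV" using c by (simp add: norm_mult)
  then show ?thesis by (rule abs_summable_summable)
qed

lemma Wc_bound:
  assumes c: "(\<lambda>k. norm (c k)) summable_on UNIV"
  shows "norm (Wc c x) \<le> (\<Sum>\<^sub>\<infinity>k. norm (c k))"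
proof -
  have "(\<lambda>k. norm (c k * ek k x)) summable_on UNIV" using c by (simp add: norm_mult)
  then have "norm (Wc c x) \<le> (\<Sum>\<^sub>\<infinity>k. norm (c k * ek k x))"
    unfolding Wc_def by (rule norm_infsum_bound)
  then show ?thesis by (simp add: norm_mult)
qed

lemma Wc_periodic: "Wc c (x + 1) = Wc c x"
  unfolding Wc_def by (simp add: ek_periodic)

lemma Wc_01: "Wc c 1 = Wc c 0"
  unfolding Wc_def by simp

lemma abs_int_times_cont_c:
  fixes v G :: "real \<Rightarrow> complex"
  assumes v: "v absolutely_integrable_on {a..b}" and G: "continuous_on {a..b} G"
  shows "(\<lambda>x. v x * G x) absolutely_integrable_on {a..b}"
proof -
  have B: "bounded (G ` {a..b})"
    by (intro compact_imp_bounded compact_continuous_image G) auto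
  have Sl: "{a..b} \<in> sets lebesgue" by simp
  have "(\<lambda>x. G x * v x) absolutely_integrable_on {a..b}"
    by (rule absolutely_integrable_bounded_measurable_product[OF bilinear_times
      continuous_imp_measurable_on_sets_lebesgue[OF G Sl] Sl B v])
  then show ?thesis by (simp add: mult.commute)
qed

lemma termwise_integral:
  fixes v :: "real \<Rightarrow> complex"
  assumes c: "(\<lambda>k. norm (c k)) summable_on UNIV"
    and v: "v absolutely_integrable_on {a..b}"
  shows "((\<lambda>k. c k * integral {a..b} (\<lambda>x. v x * ek k x)) has_sum
           integral {a..b} (\<lambda>x. v x * Wc c x)) UNIV"
proof -
  define S where "S F x = (\<Sum>k\<in>F. c k * ek k x)" for F x
  have vi: "(\<lambda>x. norm (v x)) integrable_on {a..b}" using v absolutely_integrable_on_def by blast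
  have intek: "(\<lambda>x. v x * ek k x) integrable_on {a..b}" for k
    using abs_int_times_cont_c[OF v continuous_on_ek] absolutely_integrable_on_def by blast
  have intW: "(\<lambda>x. v x * Wc c x) integrable_on {a..b}"
    using abs_int_times_cont_c[OF v Wc_cont[OF c]] absolutely_integrable_on_def by blast
  have sumeq: "(\<Sum>k\<in>F. c k * integral {a..b} (\<lambda>x. v x * ek k x)) = integral {a..b} (\<lambda>x. v x * S F x)"
    if "finite F" for F
  proof -
    have "(\<Sum>k\<in>F. c k * integral {a..b} (\<lambda>x. v x * ek k x)) =
          (\<Sum>k\<in>F. integral {a..b} (\<lambda>x. c k * (v x * ek k x)))"
      by (simp add: integral_mult_right)
    also have "\<dots> = integral {a..b} (\<lambda>x. \<Sum>k\<in>F. c k * (v x * ek k x))"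
      by (rule integral_sum[symmetric, OF that]) (intro integrable_on_mult_right intek)
    also have "\<dots> = integral {a..b} (\<lambda>x. v x * S F x)"
      unfolding S_def by (simp add: sum_distrib_left algebra_simps)
    finally show ?thesis .
  qed
  have intS: "(\<lambda>x. v x * S F x) integrable_on {a..b}" for F
    unfolding S_def by (rule absolutely_integrable_on_def[THEN iffD1, THEN conjunct1],
        rule abs_int_times_cont_c[OF v]) (intro continuous_intros)
  have U: "uniform_limit {a..b} S (Wc c) (finite_subsets_at_top UNIV)"
    unfolding S_def by (rule Wc_unif[OF c])
  have lim: "((\<lambda>F. integral {a..b} (\<lambda>x. v x * S F x)) \<longlongrightarrow> integral {a..b} (\<lambda>x. v x * Wc c x))
      (finite_subsets_at_top UNIV)"
  proof (rule tendstoI)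
    fix e :: real assume e: "e > 0"
    define I where "I = integral {a..b} (\<lambda>x. norm (v x))"
    have I0: "I \<ge> 0" unfolding I_def by (rule integral_nonneg[OF vi]) simp
    define d where "d = e / (I + 1)"
    have d: "d > 0" using e I0 by (simp add: d_def)
    have "\<forall>\<^sub>F F in finite_subsets_at_top UNIV. \<forall>x\<in>{a..b}. dist (S F x) (Wc c x) < d"
      using U d unfolding uniform_limit_iff by blast
    then show "\<forall>\<^sub>F F in finite_subsets_at_top UNIV.
        dist (integral {a..b} (\<lambda>x. v x * S F x)) (integral {a..b} (\<lambda>x. v x * Wc c x)) < e"
    proof eventually_elim
      case (elim F)
      have "norm (integral {a..b} (\<lambda>x. v x * S F x) - integral {a..b} (\<lambda>x. v x * Wc c x))
          = norm (integral {a..b} (\<lambda>x. v x * (S F x - Wc c x)))"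
        by (subst integral_diff[OF intS intW, symmetric]) (simp add: algebra_simps)
      also have "\<dots> \<le> integral {a..b} (\<lambda>x. d * norm (v x))"
      proof (rule integral_norm_bound_integral)
        show "(\<lambda>x. v x * (S F x - Wc c x)) integrable_on {a..b}"
          using integrable_diff[OF intS intW] by (simp add: algebra_simps)
        show "(\<lambda>x. d * norm (v x)) integrable_on {a..b}"
          by (rule integrable_on_mult_right[OF vi])
        show "norm (v x * (S F x - Wc c x)) \<le> d * norm (v x)" if "x \<in> {a..b}" for x
        proof -
          have "norm (S F x - Wc c x) \<le> d" using elim that by (simp add: dist_norm less_imp_le)
          then have "norm (v x) * norm (S F x - Wc c x) \<le> norm (v x) * d"
            by (rule mult_left_mono) simp
          then show ?thesis by (simp add: norm_mult mult.commute)
        qed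
      qed
      also have "\<dots> = d * I" unfolding I_def by (simp add: integral_mult_right)
      also have "\<dots> < e" using e I0 by (simp add: d_def field_simps)
      finally show ?case by (simp add: dist_norm)
    qed
  qed
  show ?thesis unfolding has_sum_def
    using lim by (rule Lim_transform_eventually)
      (auto intro!: eventually_finite_subsets_at_top_weakI simp: sumeq)
qed



lemma ek_integral:
  assumes m: "m \<noteq> 0" and ab: "a \<le> b"
  shows "(ek m has_integral (ek m b - ek m a) / (\<i> * complex_of_real (2 * pi * real_of_int m))) {a..b}"
proof -
  define c where "c = \<i> * complex_of_real (2 * pi * real_of_int m)"
  have c0: "c \<noteq> 0" using m by (simp add: c_def)
  have "(ek m has_integral (ek m b / c - ek m a / c)) {a..b}"
  proof (rule fundamental_theorem_of_calculus[OF ab])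
    fix x assume "x \<in> {a..b}"
    have "((\<lambda>x. ek m x / c) has_vector_derivative (c * ek m x) / c) (at x within {a..b})"
      using bounded_linear.has_vector_derivative[OF bounded_linear_divide ek_has_vector_derivative]
      unfolding c_def by blast
    then show "((\<lambda>x. ek m x / c) has_vector_derivative ek m x) (at x within {a..b})"
      using c0 by simp
  qed
  then show ?thesis
    by (simp only: c_def diff_divide_distrib)
qed

lemma ek_integral01: "integral {0..1} (ek m) = (if m = 0 then 1 else 0)"
proof (cases "m = 0")
  case True
  have "ek 0 = (\<lambda>_. 1)" by auto
  then show ?thesis using True by simp
next
  case False
  show ?thesis using ek_integral[OF False, of 0 1] False
    by (simp add: integral_unique)
qed

lemma ek_orth: "integral {0..1} (\<lambda>x. ek (-k) x * ek j x) = (if j = k then 1 else 0)"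
proof -
  have "(\<lambda>x. ek (-k) x * ek j x) = ek (j - k)" by (auto simp: ek_mult)
  then show ?thesis by (simp add: ek_integral01)
qed

lemma fcoeff_ek: "fcoeff f k = integral {0..1} (\<lambda>x. ek (-k) x * complex_of_real (f x))"
  unfolding fcoeff_def ek_def by (simp add: mult.commute)

definition symc :: "(int \<Rightarrow> complex) \<Rightarrow> bool" where
  "symc c \<longleftrightarrow> (\<forall>k. c (-k) = cnj (c k))"

lemma Wc_real:
  assumes s: "symc c"
  shows "complex_of_real (Re (Wc c x)) = Wc c x"
proof -
  have "cnj (Wc c x) = (\<Sum>\<^sub>\<infinity>k. cnj (c k * ek k x))"
    unfolding Wc_def by (rule infsum_cnj[symmetric])
  also have "\<dots> = (\<Sum>\<^sub>\<infinity>k. c (-k) * ek (-k) x)"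
    using s by (simp add: symc_def cnj_ek)
  also have "\<dots> = (\<Sum>\<^sub>\<infinity>k. c k * ek k x)"
    by (rule infsum_reindex_bij_betw[of uminus UNIV UNIV "\<lambda>k. c k * ek k x"])
       (auto intro!: bij_betwI[of _ _ _ uminus])
  finally have "cnj (Wc c x) = Wc c x" unfolding Wc_def .
  then have "Im (Wc c x) = 0" by (metis cnj.simps(2) complex.expand neg_equal_zero)
  then show ?thesis by (simp add: complex_eq_iff)
qed

lemma fcoeff_Wc:
  assumes c: "(\<lambda>k. norm (c k)) summable_on UNIV" and s: "symc c"
  shows "fcoeff (\<lambda>x. Re (Wc c x)) k = c k"
proof -
  have v: "ek (-k) absolutely_integrable_on {0..1}"
    using absolutely_integrable_continuous[of 0 1 "ek (-k)"] by (simp add: continuous_on_ek)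
  have "fcoeff (\<lambda>x. Re (Wc c x)) k = integral {0..1} (\<lambda>x. ek (-k) x * Wc c x)"
    unfolding fcoeff_ek using Wc_real[OF s] by simp
  moreover have "((\<lambda>j. c j * integral {0..1} (\<lambda>x. ek (-k) x * ek j x)) has_sum
      integral {0..1} (\<lambda>x. ek (-k) x * Wc c x)) UNIV"
    by (rule termwise_integral[OF c v])
  moreover have "((\<lambda>j. c j * integral {0..1} (\<lambda>x. ek (-k) x * ek j x)) has_sum c k) UNIV"
  proof -
    have "((\<lambda>j. c j * integral {0..1} (\<lambda>x. ek (-k) x * ek j x)) has_sum c k) {k}"
      by (rule has_sum_finiteI) (simp_all add: ek_orth)
    then show ?thesis
      by (rule has_sum_cong_neutral[THEN iffD1, rotated -1]) (auto simp: ek_orth)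
  qed
  ultimately show ?thesis using has_sum_unique by metis
qed

lemma in_L2T_Wc:
  assumes c: "(\<lambda>k. norm (c k)) summable_on UNIV"
  shows "in_L2T (\<lambda>x. Re (Wc c x))"
proof -
  have cW: "continuous_on S (Wc c)" for S by (rule Wc_cont[OF c])
  have cont: "continuous_on UNIV (\<lambda>x. Re (Wc c x))"
    by (intro continuous_intros cW)
  have "continuous_on {0..1} (\<lambda>x. Re (Wc c x))" using cont continuous_on_subset by blast
  then have m: "(\<lambda>x. Re (Wc c x)) measurable_on {0..1}"
    by (simp add: measurable_on_iff_borel_measurable continuous_imp_measurable_on_sets_lebesgue)
  have "continuous_on {0..1} (\<lambda>x. (Re (Wc c x))^2)"
    by (intro continuous_intros cW)
  then have "(\<lambda>x. (Re (Wc c x))^2) integrable_on {0..1}"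
    by (rule integrable_continuous_interval)
  then show ?thesis unfolding in_L2T_def periodic1_def using m by (simp add: Wc_periodic)
qed



definition dc :: "(int \<Rightarrow> complex) \<Rightarrow> int \<Rightarrow> complex" where
  "dc c k = \<i> * complex_of_real (2 * pi * real_of_int k) * c k"

lemma has_sum_diff':
  fixes f g :: "'a \<Rightarrow> 'b::topological_ab_group_add"
  assumes "(f has_sum a) A" "(g has_sum b) A"
  shows "((\<lambda>x. f x - g x) has_sum (a - b)) A"
proof -
  have "((\<lambda>x. - g x) has_sum (- b)) A" using assms(2) by (simp add: has_sum_uminus)
  from has_sum_add[OF assms(1) this] show ?thesis by simp
qed

lemma Wc_integral:
  assumes c: "(\<lambda>k. norm (c k)) summable_on UNIV"
    and c': "(\<lambda>k. norm (dc c k)) summable_on UNIV"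
    and y: "0 \<le> y"
  shows "integral {0..y} (Wc (dc c)) = Wc c y - Wc c 0"
proof -
  have v: "(\<lambda>_. 1::complex) absolutely_integrable_on {0..y}"
    using absolutely_integrable_continuous[of 0 y "\<lambda>_. 1::complex"] by simp
  have h1: "((\<lambda>k. dc c k * integral {0..y} (\<lambda>x. 1 * ek k x)) has_sum
      integral {0..y} (\<lambda>x. 1 * Wc (dc c) x)) UNIV"
    by (rule termwise_integral[OF c' v])
  have eq: "dc c k * integral {0..y} (ek k) = c k * ek k y - c k * ek k 0" for k
  proof (cases "k = 0")
    case True then show ?thesis by (simp add: dc_def)
  next
    case False
    define D where "D = \<i> * complex_of_real (2 * pi * real_of_int k)"
    have D0: "D \<noteq> 0" using False by (simp add: D_def)
    have "integral {0..y} (ek k) = (ek k y - ek k 0) / D"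
      using ek_integral[OF False y] unfolding D_def by (rule integral_unique)
    then have DI: "D * integral {0..y} (ek k) = ek k y - ek k 0" using D0 by simp
    have "dc c k * integral {0..y} (ek k) = c k * (D * integral {0..y} (ek k))"
      by (simp add: dc_def D_def)
    also have "\<dots> = c k * ek k y - c k * ek k 0" by (simp add: DI right_diff_distrib)
    finally show ?thesis .
  qed
  have h2: "((\<lambda>k. c k * ek k y - c k * ek k 0) has_sum (Wc c y - Wc c 0)) UNIV"
    unfolding Wc_def by (intro has_sum_diff' has_sum_infsum Wc_summable[OF c])
  have "((\<lambda>k. c k * ek k y - c k * ek k 0) has_sum integral {0..y} (Wc (dc c))) UNIV"
    using h1 by (simp add: eq)
  then show ?thesis using h2 has_sum_unique by blast
qed

lemma Wc_deriv:
  assumes c: "(\<lambda>k. norm (c k)) summable_on UNIV"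
    and c': "(\<lambda>k. norm (dc c k)) summable_on UNIV"
    and x: "x \<in> {0..1}"
  shows "(Wc c has_vector_derivative Wc (dc c) x) (at x within {0..1})"
proof -
  have "((\<lambda>u. integral {0..u} (Wc (dc c))) has_vector_derivative Wc (dc c) x) (at x within {0..1})"
    by (rule integral_has_vector_derivative[OF Wc_cont[OF c'] x])
  then have "((\<lambda>u. Wc c 0 + integral {0..u} (Wc (dc c))) has_vector_derivative 0 + Wc (dc c) x)
      (at x within {0..1})"
    by (intro has_vector_derivative_add has_vector_derivative_const)
  then have "((\<lambda>u. Wc c 0 + integral {0..u} (Wc (dc c))) has_vector_derivative Wc (dc c) x)
      (at x within {0..1})" by simp
  then show ?thesis
    by (rule has_vector_derivative_transform[OF x, rotated]) (simp add: Wc_integral[OF c c'])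
qed

lemma symc_dc: "symc c \<Longrightarrow> symc (dc c)"
  unfolding symc_def dc_def by simp



lemma summable_on_nat_nonneg:
  fixes f :: "nat \<Rightarrow> real"
  assumes "summable f" "\<And>n. 0 \<le> f n"
  shows "f summable_on UNIV"
  using sums_nonneg_imp_has_sum[OF summable_sums[OF assms(1)] assms(2)] summable_on_def by blast

lemma summable_int_even:
  fixes h :: "int \<Rightarrow> real"
  assumes "(\<lambda>n. h (int n)) summable_on UNIV" and "\<And>k. h (-k) = h k"
  shows "h summable_on UNIV"
proof -
  have A: "h summable_on (range int)"
    using assms(1) by (subst summable_on_reindex) (auto simp: o_def)
  have B: "h summable_on (range (\<lambda>n. - int n))"
    using assms by (subst summable_on_reindex) (auto simp: o_def inj_on_def)
  have "range int \<union> range (\<lambda>n. - int n) = (UNIV :: int set)"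
  proof -
    have "k \<in> range int \<union> range (\<lambda>n. - int n)" for k :: int
    proof (cases "k \<ge> 0")
      case True then show ?thesis by (metis UnI1 nonneg_int_cases rangeI)
    next
      case False then have "k = - int (nat (-k))" by simp
      then show ?thesis by (metis UnI2 rangeI)
    qed
    then show ?thesis by auto
  qed
  then show ?thesis using summable_on_union[OF A B] by simp
qed

lemma sob_weight_pos: "sob_weight r k > 0"
proof -
  have "(2 * pi * real_of_int k)^2 \<ge> 0" by simp
  then have "1 + (2 * pi * real_of_int k)^2 \<noteq> 0" by linarith
  then show ?thesis unfolding sob_weight_def by simp
qed

lemma sob_weight_ge1: "r \<ge> 0 \<Longrightarrow> sob_weight r k \<ge> 1"
  unfolding sob_weight_def by (simp add: ge_one_powr_ge_zero)

lemma sob_weight_mono: "r' \<le> r \<Longrightarrow> sob_weight r' k \<le> sob_weight r k"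
  unfolding sob_weight_def by (rule powr_mono) simp_all

lemma inv_weight_summable:
  assumes r: "r > 1/2"
  shows "(\<lambda>k. 1 / sob_weight r k) summable_on UNIV"
proof -
  define h where "h k = (1 + (real_of_int k)^2) powr (-r)" for k :: int
  have hn: "summable (\<lambda>n. h (int n))"
  proof (rule summable_comparison_test'[of "\<lambda>n. real n powr (- 2 * r)" 1])
    show "summable (\<lambda>n. real n powr (- 2 * r))"
      using r by (simp add: summable_real_powr_iff)
    fix n :: nat assume n: "1 \<le> n"
    have "h (int n) = (1 + (real n)^2) powr (-r)" by (simp add: h_def)
    also have "\<dots> \<le> ((real n)^2) powr (-r)"
      by (rule powr_mono2') (use r n in auto)
    also have "\<dots> = real n powr (- 2 * r)"
    proof -
      have p: "real n powr 2 = (real n)^2" using powr_realpow[of "real n" 2] n by simp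
      have "((real n)^2) powr (-r) = (real n powr 2) powr (-r)" by (simp add: p)
      also have "\<dots> = real n powr (2 * - r)" by (rule powr_powr)
      also have "2 * - r = - 2 * r" by simp
      finally show ?thesis .
    qed
    finally show "norm (h (int n)) \<le> real n powr (- 2 * r)"
      by (simp add: h_def)
  qed
  have "(\<lambda>n. h (int n)) summable_on UNIV"
    by (rule summable_on_nat_nonneg[OF hn]) (simp add: h_def)
  then have H: "h summable_on UNIV"
    by (rule summable_int_even) (simp add: h_def)
  show ?thesis
  proof (rule summable_on_comparison_test[OF H])
    fix k :: int
    show "0 \<le> 1 / sob_weight r k" using sob_weight_pos[of r k] by simp
    have "1 + (real_of_int k)^2 \<le> 1 + (2 * pi * real_of_int k)^2"
    proof -
      have "(real_of_int k)^2 \<le> (2 * pi)^2 * (real_of_int k)^2"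
      proof -
        have "(1::real) \<le> 2 * pi" using pi_gt3 by simp
        then have "1 \<le> (2 * pi)^2" using one_le_power[of "2 * pi" 2] by blast
        then have "1 * (real_of_int k)^2 \<le> (2 * pi)^2 * (real_of_int k)^2"
          by (rule mult_right_mono) simp
        then show ?thesis by simp
      qed
      then show ?thesis by (simp add: power_mult_distrib)
    qed
    moreover have "0 < 1 + (real_of_int k)^2"
      by (metis add_pos_nonneg zero_le_power2 zero_less_one)
    ultimately have "(1 + (2 * pi * real_of_int k)^2) powr (-r) \<le> (1 + (real_of_int k)^2) powr (-r)"
      by (intro powr_mono2') (use r in auto)
    then show "1 / sob_weight r k \<le> h k"
      unfolding sob_weight_def h_def by (simp add: powr_minus_divide)
  qed
qed



lemma amgm_le:
  fixes a t :: real
  assumes t: "t > 0"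
  shows "a \<le> (t * a^2 + 1 / t) / 2"
proof -
  have "0 \<le> (t * a - 1)^2" by simp
  then have "2 * t * a \<le> t^2 * a^2 + 1" by (simp add: power2_eq_square algebra_simps)
  then have "a * (2 * t) \<le> t^2 * a^2 + 1" by (simp add: algebra_simps)
  then have "a \<le> (t^2 * a^2 + 1) / (2 * t)" using t by (simp add: pos_le_divide_eq)
  moreover have "(t * a^2 + 1 / t) / 2 = (t^2 * a^2 + 1) / (2 * t)"
    using t by (simp add: field_simps power2_eq_square)
  ultimately show ?thesis by linarith
qed

lemma le_amgm_opt:
  fixes A P Q :: real
  assumes P: "P \<ge> 0" and Q: "Q \<ge> 0" and h: "\<And>t. t > 0 \<Longrightarrow> A \<le> (t * P + Q / t) / 2"
  shows "A \<le> sqrt P * sqrt Q"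
proof (cases "P > 0 \<and> Q > 0")
  case True
  define t where "t = sqrt Q / sqrt P"
  have t: "t > 0" using True by (simp add: t_def)
  have sP: "sqrt P * sqrt P = P" using real_sqrt_pow2[OF P] by (simp only: power2_eq_square)
  have sQ: "sqrt Q * sqrt Q = Q" using real_sqrt_pow2[OF Q] by (simp only: power2_eq_square)
  have nP: "sqrt P \<noteq> 0" and nQ: "sqrt Q \<noteq> 0" using True by simp_all
  have "t * P = sqrt Q / sqrt P * (sqrt P * sqrt P)" using P by (simp add: t_def)
  also have "\<dots> = sqrt P * sqrt Q" using nP by (simp add: field_simps del: real_sqrt_mult_self)
  finally have e1: "t * P = sqrt P * sqrt Q" .
  have "Q / t = (sqrt Q * sqrt Q) / (sqrt Q / sqrt P)" using Q by (simp add: t_def)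
  also have "\<dots> = sqrt P * sqrt Q" using nP nQ by (simp add: field_simps del: real_sqrt_mult_self)
  finally have e2: "Q / t = sqrt P * sqrt Q" .
  show ?thesis using h[OF t] e1 e2 by simp
next
  case False
  then have z: "P = 0 \<or> Q = 0" using P Q by auto
  have "A \<le> 0"
  proof (rule field_le_epsilon)
    fix e :: real assume e: "e > 0"
    show "A \<le> 0 + e"
    proof (cases "P = 0")
      case True
      define t where "t = (Q + 1) / e"
      have t: "t > 0" using e Q by (simp add: t_def)
      have "A \<le> Q / t / 2" using h[OF t] True by simp
      also have "\<dots> = Q * e / (Q + 1) / 2" using e Q by (simp add: t_def)
      also have "\<dots> \<le> e" using e Q by (simp add: field_simps)
      finally show ?thesis by simp
    next
      case False
      then have Q0: "Q = 0" using z by simp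
      define t where "t = e / (P + 1)"
      have t: "t > 0" using e P by (simp add: t_def)
      have "A \<le> t * P / 2" using h[OF t] Q0 by simp
      also have "\<dots> = e * P / (P + 1) / 2" by (simp add: t_def)
      also have "\<dots> \<le> e" using e P by (simp add: field_simps)
      finally show ?thesis by simp
    qed
  qed
  then show ?thesis using z by auto
qed

definition Kc :: "real \<Rightarrow> real" where
  "Kc r = (\<Sum>\<^sub>\<infinity>k. 1 / sob_weight r k)"

lemma coef_abs:
  fixes d :: "int \<Rightarrow> complex"
  assumes r: "r > 1/2" and d: "(\<lambda>k. sob_weight r k * (norm (d k))^2) summable_on UNIV"
  shows "(\<lambda>k. norm (d k)) summable_on UNIV"
    "(\<Sum>\<^sub>\<infinity>k. norm (d k)) \<le> sqrt (Kc r) * sqrt (\<Sum>\<^sub>\<infinity>k. sob_weight r k * (norm (d k))^2)"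
proof -
  define N where "N = (\<Sum>\<^sub>\<infinity>k. sob_weight r k * (norm (d k))^2)"
  have K: "(\<lambda>k. 1 / sob_weight r k) summable_on UNIV" by (rule inv_weight_summable[OF r])
  have tm: "norm (d k) \<le> (t / 2) * (sob_weight r k * (norm (d k))^2) + (1 / (2 * t)) * (1 / sob_weight r k)"
    if t: "t > 0" for t k
  proof -
    have w: "t * sob_weight r k > 0" using t sob_weight_pos[of r k] by simp
    have "norm (d k) \<le> ((t * sob_weight r k) * (norm (d k))^2 + 1 / (t * sob_weight r k)) / 2"
      by (rule amgm_le[OF w])
    also have "\<dots> = (t / 2) * (sob_weight r k * (norm (d k))^2) + (1 / (2 * t)) * (1 / sob_weight r k)"
      by (simp add: field_simps)
    finally show ?thesis .
  qed
  have sg: "(\<lambda>k. (t / 2) * (sob_weight r k * (norm (d k))^2) + (1 / (2 * t)) * (1 / sob_weight r k)) summable_on UNIV" for t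
    by (intro summable_on_add summable_on_cmult_right d K)
  show S: "(\<lambda>k. norm (d k)) summable_on UNIV"
    by (rule summable_on_comparison_test[OF sg[of 1]]) (use tm[of 1] in auto)
  have "(\<Sum>\<^sub>\<infinity>k. norm (d k)) \<le> (t * N + Kc r / t) / 2" if t: "t > 0" for t
  proof -
    have "(\<Sum>\<^sub>\<infinity>k. norm (d k)) \<le>
        (\<Sum>\<^sub>\<infinity>k. (t / 2) * (sob_weight r k * (norm (d k))^2) + (1 / (2 * t)) * (1 / sob_weight r k))"
      by (rule infsum_mono[OF S sg]) (rule tm[OF t])
    also have "\<dots> = (t / 2) * N + (1 / (2 * t)) * Kc r"
    proof -
      have s1: "(\<lambda>k. (t / 2) * (sob_weight r k * (norm (d k))^2)) summable_on UNIV"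
        by (rule summable_on_cmult_right[OF d])
      have s2: "(\<lambda>k. (1 / (2 * t)) * (1 / sob_weight r k)) summable_on UNIV"
        by (rule summable_on_cmult_right[OF K])
      have i1: "(\<Sum>\<^sub>\<infinity>k. (t / 2) * (sob_weight r k * (norm (d k))^2)) = (t / 2) * N"
        unfolding N_def by (rule infsum_cmult_right) (rule d)
      have i2: "(\<Sum>\<^sub>\<infinity>k. (1 / (2 * t)) * (1 / sob_weight r k)) = (1 / (2 * t)) * Kc r"
        unfolding Kc_def by (rule infsum_cmult_right) (rule K)
      show ?thesis by (simp only: infsum_add[OF s1 s2] i1 i2)
    qed
    also have "\<dots> = (t * N + Kc r / t) / 2" by (simp add: field_simps)
    finally show ?thesis .
  qed
  moreover have "N \<ge> 0" unfolding N_def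
    by (rule infsum_nonneg) (simp add: less_imp_le[OF sob_weight_pos])
  moreover have "Kc r \<ge> 0" unfolding Kc_def
    by (rule infsum_nonneg) (simp add: less_imp_le[OF sob_weight_pos])
  ultimately have "(\<Sum>\<^sub>\<infinity>k. norm (d k)) \<le> sqrt N * sqrt (Kc r)"
    by (intro le_amgm_opt) auto
  then show "(\<Sum>\<^sub>\<infinity>k. norm (d k)) \<le> sqrt (Kc r) * sqrt (\<Sum>\<^sub>\<infinity>k. sob_weight r k * (norm (d k))^2)"
    by (simp add: N_def mult.commute)
qed



lemma in_L2T_absint:
  assumes "in_L2T f"
  shows "f absolutely_integrable_on {0..1}"
proof -
  have m: "f measurable_on {0..1}" and sq: "(\<lambda>x. (f x)^2) integrable_on {0..1}"
    using assms unfolding in_L2T_def by auto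
  have b: "f \<in> borel_measurable (lebesgue_on {0..1})"
    using m by (simp add: measurable_on_iff_borel_measurable)
  have i: "(\<lambda>x. (1/2) * (1 + (f x)^2)) integrable_on {0..1}"
    by (intro integrable_on_mult_right integrable_add sq integrable_const_ivl)
  show ?thesis
  proof (rule measurable_bounded_by_integrable_imp_absolutely_integrable[OF b _ i])
    show "norm (f x) \<le> (1/2) * (1 + (f x)^2)" for x
    proof -
      have "0 \<le> (\<bar>f x\<bar> - 1)^2" by simp
      moreover have "(\<bar>f x\<bar> - 1)^2 = (f x)^2 - 2 * \<bar>f x\<bar> + 1"
        by (simp add: power2_eq_square algebra_simps abs_mult_self_eq)
      ultimately show ?thesis by simp
    qed
  qed simp
qed

lemma fcoeff_cnj:
  shows "fcoeff f (-k) = cnj (fcoeff f k)"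
  unfolding fcoeff_def integral_cnj by (simp add: cis_cnj)

lemma symc_fcoeff: "symc (fcoeff f)"
  unfolding symc_def by (simp add: fcoeff_cnj)

lemma fcoeff_int:
  assumes "f absolutely_integrable_on {0..1}"
  shows "(\<lambda>x. complex_of_real (f x) * cis (- 2 * pi * real_of_int k * x)) integrable_on {0..1}"
proof -
  have "(\<lambda>x. complex_of_real (f x) * ek (-k) x) absolutely_integrable_on {0..1}"
    by (rule abs_int_times_ek[OF assms])
  then show ?thesis unfolding ek_def by (simp add: absolutely_integrable_on_def)
qed

lemma fcoeff_lin:
  assumes f: "f absolutely_integrable_on {0..1}" and g: "g absolutely_integrable_on {0..1}"
  shows "fcoeff (\<lambda>x. a * f x + b * g x) k = complex_of_real a * fcoeff f k + complex_of_real b * fcoeff g k"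
proof -
  have i1: "(\<lambda>x. complex_of_real a * (complex_of_real (f x) * cis (- 2 * pi * real_of_int k * x))) integrable_on {0..1}"
    by (rule integrable_on_mult_right[OF fcoeff_int[OF f]])
  have i2: "(\<lambda>x. complex_of_real b * (complex_of_real (g x) * cis (- 2 * pi * real_of_int k * x))) integrable_on {0..1}"
    by (rule integrable_on_mult_right[OF fcoeff_int[OF g]])
  have "fcoeff (\<lambda>x. a * f x + b * g x) k =
    integral {0..1} (\<lambda>x. complex_of_real a * (complex_of_real (f x) * cis (- 2 * pi * real_of_int k * x)) +
                         complex_of_real b * (complex_of_real (g x) * cis (- 2 * pi * real_of_int k * x)))"
    unfolding fcoeff_def by (rule integral_cong) (simp add: algebra_simps)
  also have "\<dots> = complex_of_real a * fcoeff f k + complex_of_real b * fcoeff g k"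
    unfolding fcoeff_def integral_add[OF i1 i2] integral_mult_right ..
  finally show ?thesis .
qed

lemma in_L2T_lin:
  assumes f: "in_L2T f" and g: "in_L2T g"
  shows "in_L2T (\<lambda>x. a * f x + b * g x)"
proof -
  have fm: "f measurable_on {0..1}" and gm: "g measurable_on {0..1}"
    and fs: "(\<lambda>x. (f x)^2) integrable_on {0..1}" and gs: "(\<lambda>x. (g x)^2) integrable_on {0..1}"
    using f g unfolding in_L2T_def by auto
  have hm: "(\<lambda>x. a * f x + b * g x) measurable_on {0..1}"
    by (intro measurable_on_add measurable_on_cmul fm gm)
  have hsm: "(\<lambda>x. (a * f x + b * g x)^2) \<in> borel_measurable (lebesgue_on {0..1})"
  proof -
    have "(\<lambda>x. (a * f x + b * g x) *\<^sub>R (a * f x + b * g x)) measurable_on {0..1}"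
      by (rule measurable_on_scaleR[OF hm hm])
    then show ?thesis by (simp add: measurable_on_iff_borel_measurable power2_eq_square)
  qed
  have i: "(\<lambda>x. 2 * a^2 * (f x)^2 + 2 * b^2 * (g x)^2) integrable_on {0..1}"
    by (intro integrable_add integrable_on_mult_right fs gs)
  have hs: "(\<lambda>x. (a * f x + b * g x)^2) integrable_on {0..1}"
  proof (rule measurable_bounded_by_integrable_imp_integrable[OF hsm i])
    show "norm ((a * f x + b * g x)^2) \<le> 2 * a^2 * (f x)^2 + 2 * b^2 * (g x)^2" for x
    proof -
      have "0 \<le> (a * f x - b * g x)^2" by simp
      moreover have "2 * a^2 * (f x)^2 + 2 * b^2 * (g x)^2 - (a * f x + b * g x)^2 = (a * f x - b * g x)^2"
        by (simp add: power2_eq_square algebra_simps)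
      moreover have "norm ((a * f x + b * g x)^2) = (a * f x + b * g x)^2" by simp
      ultimately show ?thesis by linarith
    qed
  qed simp
  show ?thesis using f g hm hs unfolding in_L2T_def periodic1_def by simp
qed

lemma norm_sum_sq: "(norm (x + y :: complex))^2 \<le> 2 * (norm x)^2 + 2 * (norm y)^2"
proof -
  have "norm (x + y) \<le> norm x + norm y" by (rule norm_triangle_ineq)
  then have "(norm (x + y))^2 \<le> (norm x + norm y)^2" by (simp add: power_mono)
  also have "\<dots> \<le> 2 * (norm x)^2 + 2 * (norm y)^2"
  proof -
    have "0 \<le> (norm x - norm y)^2" by simp
    then show ?thesis by (simp add: power2_eq_square algebra_simps)
  qed
  finally show ?thesis .
qed

lemma in_Hs_lin:
  assumes f: "in_Hs r f" and g: "in_Hs r g"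
  shows "in_Hs r (\<lambda>x. a * f x + b * g x)"
proof -
  have fl: "in_L2T f" and gl: "in_L2T g"
    and fs: "(\<lambda>k. sob_weight r k * (cmod (fcoeff f k))^2) summable_on UNIV"
    and gs: "(\<lambda>k. sob_weight r k * (cmod (fcoeff g k))^2) summable_on UNIV"
    using f g unfolding in_Hs_def by auto
  have eq: "fcoeff (\<lambda>x. a * f x + b * g x) k = complex_of_real a * fcoeff f k + complex_of_real b * fcoeff g k" for k
    by (rule fcoeff_lin[OF in_L2T_absint[OF fl] in_L2T_absint[OF gl]])
  have s: "(\<lambda>k. (2 * a^2) * (sob_weight r k * (cmod (fcoeff f k))^2) + (2 * b^2) * (sob_weight r k * (cmod (fcoeff g k))^2)) summable_on UNIV"
    by (intro summable_on_add summable_on_cmult_right fs gs)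
  have "(\<lambda>k. sob_weight r k * (cmod (fcoeff (\<lambda>x. a * f x + b * g x) k))^2) summable_on UNIV"
  proof (rule summable_on_comparison_test[OF s])
    fix k
    have w: "sob_weight r k > 0" by (rule sob_weight_pos)
    have "(cmod (complex_of_real a * fcoeff f k + complex_of_real b * fcoeff g k))^2
        \<le> 2 * (cmod (complex_of_real a * fcoeff f k))^2 + 2 * (cmod (complex_of_real b * fcoeff g k))^2"
      by (rule norm_sum_sq)
    also have "\<dots> = 2 * a^2 * (cmod (fcoeff f k))^2 + 2 * b^2 * (cmod (fcoeff g k))^2"
      by (simp add: norm_mult power_mult_distrib)
    finally have "sob_weight r k * (cmod (complex_of_real a * fcoeff f k + complex_of_real b * fcoeff g k))^2
        \<le> sob_weight r k * (2 * a^2 * (cmod (fcoeff f k))^2 + 2 * b^2 * (cmod (fcoeff g k))^2)"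
      using w by (simp add: mult_left_mono)
    then show "sob_weight r k * (cmod (fcoeff (\<lambda>x. a * f x + b * g x) k))^2 \<le>
        2 * a^2 * (sob_weight r k * (cmod (fcoeff f k))^2) + 2 * b^2 * (sob_weight r k * (cmod (fcoeff g k))^2)"
      by (simp add: eq algebra_simps)
    show "0 \<le> sob_weight r k * (cmod (fcoeff (\<lambda>x. a * f x + b * g x) k))^2"
      using w by simp
  qed
  then show ?thesis unfolding in_Hs_def using in_L2T_lin[OF fl gl] by simp
qed

lemma in_Hs_mono:
  assumes f: "in_Hs r f" and rr: "r' \<le> r"
  shows "in_Hs r' f" "Hs_norm r' f \<le> Hs_norm r f"
proof -
  have fs: "(\<lambda>k. sob_weight r k * (cmod (fcoeff f k))^2) summable_on UNIV"
    using f unfolding in_Hs_def by auto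
  have le: "sob_weight r' k * (cmod (fcoeff f k))^2 \<le> sob_weight r k * (cmod (fcoeff f k))^2" for k
    by (rule mult_right_mono[OF sob_weight_mono[OF rr]]) simp
  have nn: "0 \<le> sob_weight r' k * (cmod (fcoeff f k))^2" for k
    using sob_weight_pos[of r' k] by simp
  have s: "(\<lambda>k. sob_weight r' k * (cmod (fcoeff f k))^2) summable_on UNIV"
    by (rule summable_on_comparison_test[OF fs le nn])
  then show "in_Hs r' f" using f unfolding in_Hs_def by simp
  show "Hs_norm r' f \<le> Hs_norm r f"
    unfolding Hs_norm_def by (intro real_sqrt_le_mono infsum_mono[OF s fs le])
qed

lemma Hs_coef_abs:
  assumes r: "r > 1/2" and f: "in_Hs r f"
  shows "(\<lambda>k. norm (fcoeff f k)) summable_on UNIV"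
    "(\<Sum>\<^sub>\<infinity>k. norm (fcoeff f k)) \<le> sqrt (Kc r) * Hs_norm r f"
  using coef_abs[OF r, of "fcoeff f"] f unfolding in_Hs_def Hs_norm_def by auto

lemma representation:
  assumes f: "in_L2T f" and c: "(\<lambda>k. norm (fcoeff f k)) summable_on UNIV"
  shows "negligible {x\<in>{0..1}. f x \<noteq> Re (Wc (fcoeff f) x)}"
proof -
  define g where "g x = 1 * f x + (-1) * Re (Wc (fcoeff f) x)" for x
  have fa: "f absolutely_integrable_on {0..1}" by (rule in_L2T_absint[OF f])
  have wl: "in_L2T (\<lambda>x. Re (Wc (fcoeff f) x))" by (rule in_L2T_Wc[OF c])
  have wa: "(\<lambda>x. Re (Wc (fcoeff f) x)) absolutely_integrable_on {0..1}" by (rule in_L2T_absint[OF wl])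
  have ga: "g absolutely_integrable_on {0..1}"
    unfolding g_def by (rule in_L2T_absint[OF in_L2T_lin[OF f wl]])
  have "fcoeff g k = 0" for k
    unfolding g_def by (subst fcoeff_lin[OF fa wa]) (simp add: fcoeff_Wc[OF c symc_fcoeff])
  then have z: "integral {0..1} (\<lambda>x. complex_of_real (g x) * ek k x) = 0" for k
    using fcoeff_ek[of g "-k"] by (simp add: mult.commute)
  have "negligible {x\<in>{0..1}. g x \<noteq> 0}" by (rule uniqueness[OF ga z])
  moreover have "{x\<in>{0..1}. f x \<noteq> Re (Wc (fcoeff f) x)} = {x\<in>{0..1}. g x \<noteq> 0}"
    unfolding g_def by auto
  ultimately show ?thesis by simp
qed



lemma Kc_nonneg: "Kc r \<ge> 0"
  unfolding Kc_def by (rule infsum_nonneg) (simp add: less_imp_le[OF sob_weight_pos])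

lemma Hs_norm_nonneg: "Hs_norm r f \<ge> 0"
  unfolding Hs_norm_def
  by (intro real_sqrt_ge_zero infsum_nonneg) (simp add: less_imp_le[OF sob_weight_pos])

lemma cont_Re_Wc:
  assumes c: "(\<lambda>k. norm (c k)) summable_on UNIV"
  shows "continuous_on S (\<lambda>x. Re (Wc c x))"
  by (intro continuous_intros Wc_cont[OF c])

lemma Hs_prod:
  assumes r: "r > 1/2" and f: "in_Hs r f" and g: "in_Hs r g"
  shows "(\<lambda>x. f x * g x) integrable_on {0..1}"
    "\<bar>integral {0..1} (\<lambda>x. f x * g x)\<bar> \<le> Kc r * Hs_norm r f * Hs_norm r g"
proof -
  have fl: "in_L2T f" and gl: "in_L2T g" using f g unfolding in_Hs_def by auto
  note cf = Hs_coef_abs[OF r f] and cg = Hs_coef_abs[OF r g]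
  define F where "F x = Re (Wc (fcoeff f) x)" for x
  define G where "G x = Re (Wc (fcoeff g) x)" for x
  define N where "N = {x\<in>{0..1}. f x \<noteq> F x} \<union> {x\<in>{0..1}. g x \<noteq> G x}"
  have N: "negligible N" unfolding N_def F_def G_def
    using representation[OF fl cf(1)] representation[OF gl cg(1)] by auto
  have eq: "f x * g x = F x * G x" if "x \<in> {0..1} - N" for x
    using that unfolding N_def by auto
  have cFG: "continuous_on {0..1} (\<lambda>x. F x * G x)"
    unfolding F_def G_def by (intro continuous_intros cont_Re_Wc cf(1) cg(1))
  have iFG: "(\<lambda>x. F x * G x) integrable_on {0..1}" by (rule integrable_continuous_interval[OF cFG])
  show "(\<lambda>x. f x * g x) integrable_on {0..1}"
    by (rule integrable_spike[OF iFG N]) (use eq in auto)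
  define Af where "Af = (\<Sum>\<^sub>\<infinity>k. norm (fcoeff f k))"
  define Ag where "Ag = (\<Sum>\<^sub>\<infinity>k. norm (fcoeff g k))"
  have bF: "\<bar>F x\<bar> \<le> Af" for x
    unfolding F_def Af_def using abs_Re_le_cmod Wc_bound[OF cf(1)] order_trans by blast
  have bG: "\<bar>G x\<bar> \<le> Ag" for x
    unfolding G_def Ag_def using abs_Re_le_cmod Wc_bound[OF cg(1)] order_trans by blast
  have Af0: "Af \<ge> 0" using bF[of 0] by simp
  have Ag0: "Ag \<ge> 0" using bG[of 0] by simp
  have "integral {0..1} (\<lambda>x. f x * g x) = integral {0..1} (\<lambda>x. F x * G x)"
    by (rule integral_spike[OF N]) (use eq in auto)
  also have "\<bar>\<dots>\<bar> \<le> integral {0..1} (\<lambda>x::real. Af * Ag)"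
  proof -
    have "norm (integral {0..1} (\<lambda>x. F x * G x)) \<le> integral {0..1} (\<lambda>x::real. Af * Ag)"
    proof (rule Henstock_Kurzweil_Integration.integral_norm_bound_integral)
      show "(\<lambda>x. F x * G x) integrable_on {0..1}" by (rule iFG)
      show "(\<lambda>x::real. Af * Ag) integrable_on {0..1}" by (rule integrable_const_ivl)
      show "norm (F x * G x) \<le> Af * Ag" if "x \<in> {0..1}" for x
        using bF[of x] bG[of x] by (simp add: abs_mult mult_mono')
    qed
    then show ?thesis by simp
  qed
  also have "\<dots> = Af * Ag" by simp
  also have "\<dots> \<le> (sqrt (Kc r) * Hs_norm r f) * (sqrt (Kc r) * Hs_norm r g)"
    using cf(2) cg(2) Af0 Ag0 unfolding Af_def[symmetric] Ag_def[symmetric]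
    by (intro mult_mono) auto
  also have "\<dots> = Kc r * Hs_norm r f * Hs_norm r g"
    using Kc_nonneg[of r] by (simp add: algebra_simps)
  finally show "\<bar>integral {0..1} (\<lambda>x. f x * g x)\<bar> \<le> Kc r * Hs_norm r f * Hs_norm r g" .
qed



lemma sw_step: "sob_weight s k = sob_weight (s - 1) k * (1 + (2 * pi * real_of_int k)^2)"
proof -
  have p: "0 \<le> 1 + (2 * pi * real_of_int k)^2" by (simp add: add_nonneg_nonneg)
  have "sob_weight s k = (1 + (2 * pi * real_of_int k)^2) powr ((s - 1) + 1)"
    unfolding sob_weight_def by simp
  also have "\<dots> = sob_weight (s - 1) k * (1 + (2 * pi * real_of_int k)^2)"
    unfolding sob_weight_def powr_add using p by (simp add: powr_one)
  finally show ?thesis .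
qed

lemma dc_weighted_summable:
  assumes u: "in_Hs s u"
  shows "(\<lambda>k. sob_weight (s - 1) k * (norm (dc (fcoeff u) k))^2) summable_on UNIV"
proof -
  have us: "(\<lambda>k. sob_weight s k * (cmod (fcoeff u k))^2) summable_on UNIV"
    using u unfolding in_Hs_def by auto
  show ?thesis
  proof (rule summable_on_comparison_test[OF us])
    fix k
    have w: "sob_weight (s - 1) k > 0" by (rule sob_weight_pos)
    have "(norm (dc (fcoeff u) k))^2 = (2 * pi * real_of_int k)^2 * (cmod (fcoeff u k))^2"
      unfolding dc_def by (simp add: norm_mult power_mult_distrib)
    also have "\<dots> \<le> (1 + (2 * pi * real_of_int k)^2) * (cmod (fcoeff u k))^2"
      by (rule mult_right_mono) simp_all
    finally have "sob_weight (s - 1) k * (norm (dc (fcoeff u) k))^2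
        \<le> sob_weight (s - 1) k * ((1 + (2 * pi * real_of_int k)^2) * (cmod (fcoeff u k))^2)"
      using w by (simp add: mult_left_mono)
    then show "sob_weight (s - 1) k * (norm (dc (fcoeff u) k))^2 \<le> sob_weight s k * (cmod (fcoeff u k))^2"
      by (simp add: sw_step[of s k] mult.assoc)
    show "0 \<le> sob_weight (s - 1) k * (norm (dc (fcoeff u) k))^2" using w by simp
  qed
qed

lemma dc_abs_summable:
  assumes s: "s > 3/2" and u: "in_Hs s u"
  shows "(\<lambda>k. norm (dc (fcoeff u) k)) summable_on UNIV"
  using coef_abs(1)[OF _ dc_weighted_summable[OF u]] s by simp

lemma Dx_props:
  assumes s: "s > 3/2" and u: "in_Hs s u"
  shows "in_L2T (Dx u)" "\<And>k. fcoeff (Dx u) k = dc (fcoeff u) k"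
proof -
  let ?P = "\<lambda>g. in_L2T g \<and> (\<forall>k. fcoeff g k = \<i> * complex_of_real (2 * pi * real_of_int k) * fcoeff u k)"
  have c: "(\<lambda>k. norm (dc (fcoeff u) k)) summable_on UNIV" by (rule dc_abs_summable[OF s u])
  have "?P (\<lambda>x. Re (Wc (dc (fcoeff u)) x))"
  proof (intro conjI allI)
    show "in_L2T (\<lambda>x. Re (Wc (dc (fcoeff u)) x))" by (rule in_L2T_Wc[OF c])
    show "fcoeff (\<lambda>x. Re (Wc (dc (fcoeff u)) x)) k = \<i> * complex_of_real (2 * pi * real_of_int k) * fcoeff u k" for k
      using fcoeff_Wc[OF c symc_dc[OF symc_fcoeff]] by (simp add: dc_def)
  qed
  then have "?P (Dx u)" unfolding Dx_def by (rule someI[of ?P])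
  then show "in_L2T (Dx u)" "\<And>k. fcoeff (Dx u) k = dc (fcoeff u) k" by (auto simp: dc_def)
qed

definition qc :: "(int \<Rightarrow> complex) \<Rightarrow> int \<Rightarrow> complex" where
  "qc c k = dc c k / complex_of_real (1 + (2 * pi * real_of_int k)^2)"

lemma qc_le: "norm (qc c k) \<le> norm (dc c k)"
proof -
  define X where "X = 1 + (2 * pi * real_of_int k)^2"
  have X: "1 \<le> X" unfolding X_def by simp
  have "norm (qc c k) = norm (dc c k) / X"
    unfolding qc_def X_def[symmetric] using X by (simp add: norm_divide)
  also have "\<dots> \<le> norm (dc c k)"
  proof -
    have "norm (dc c k) * 1 \<le> norm (dc c k) * X" by (rule mult_left_mono[OF X]) simp
    then show ?thesis using X by (simp add: divide_le_eq)
  qed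
  finally show ?thesis .
qed

lemma Q_props:
  assumes s: "s > 3/2" and u: "in_Hs s u"
  shows "in_L2T (Qop (Dx u))" "\<And>k. fcoeff (Qop (Dx u)) k = qc (fcoeff u) k"
proof -
  let ?P = "\<lambda>g. in_L2T g \<and> (\<forall>k. fcoeff g k = fcoeff (Dx u) k / complex_of_real (1 + (2 * pi * real_of_int k)^2))"
  have cd: "(\<lambda>k. norm (dc (fcoeff u) k)) summable_on UNIV" by (rule dc_abs_summable[OF s u])
  have c: "(\<lambda>k. norm (qc (fcoeff u) k)) summable_on UNIV"
    by (rule summable_on_comparison_test[OF cd]) (simp_all add: qc_le)
  have sy: "symc (qc (fcoeff u))"
    using symc_dc[OF symc_fcoeff[of u]] unfolding symc_def qc_def by simp
  have "?P (\<lambda>x. Re (Wc (qc (fcoeff u)) x))"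
  proof (intro conjI allI)
    show "in_L2T (\<lambda>x. Re (Wc (qc (fcoeff u)) x))" by (rule in_L2T_Wc[OF c])
    show "fcoeff (\<lambda>x. Re (Wc (qc (fcoeff u)) x)) k = fcoeff (Dx u) k / complex_of_real (1 + (2 * pi * real_of_int k)^2)" for k
      using fcoeff_Wc[OF c sy] by (simp add: qc_def Dx_props(2)[OF s u])
  qed
  then have "?P (Qop (Dx u))" unfolding Qop_def by (rule someI[of ?P])
  then show "in_L2T (Qop (Dx u))" "\<And>k. fcoeff (Qop (Dx u)) k = qc (fcoeff u) k"
    by (auto simp: qc_def Dx_props(2)[OF s u])
qed



lemma qc_abs_summable:
  assumes s: "s > 3/2" and u: "in_Hs s u"
  shows "(\<lambda>k. norm (qc (fcoeff u) k)) summable_on UNIV"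
  by (rule summable_on_comparison_test[OF dc_abs_summable[OF s u]]) (simp_all add: qc_le)

lemma symc_qc: "symc c \<Longrightarrow> symc (qc c)"
  using symc_dc[of c] unfolding symc_def qc_def by simp

lemma integral_cube_zero:
  assumes ca: "(\<lambda>k. norm (c k)) summable_on UNIV" and cd: "(\<lambda>k. norm (dc c k)) summable_on UNIV"
  shows "integral {0..1} (\<lambda>x. (Re (Wc c x))^2 * Re (Wc (dc c) x)) = 0"
proof -
  define U where "U x = Re (Wc c x)" for x
  define D where "D x = Re (Wc (dc c) x)" for x
  have dU: "(U has_real_derivative D x) (at x within {0..1})" if x: "x \<in> {0..1}" for x
  proof -
    have "((\<lambda>x. Re (Wc c x)) has_vector_derivative Re (Wc (dc c) x)) (at x within {0..1})"
      by (rule bounded_linear.has_vector_derivative[OF bounded_linear_Re Wc_deriv[OF ca cd x]])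
    then show ?thesis unfolding U_def D_def by (simp add: has_real_derivative_iff_has_vector_derivative)
  qed
  have dC: "((\<lambda>x. U x ^ 3 / 3) has_vector_derivative (U x)^2 * D x) (at x within {0..1})"
    if x: "x \<in> {0..1}" for x
  proof -
    have "((\<lambda>x. U x ^ 3 / 3) has_real_derivative (of_nat 3 * (D x * U x ^ (3 - Suc 0))) / 3) (at x within {0..1})"
      by (rule DERIV_cdivide[OF DERIV_power[OF dU[OF x]]])
    then have "((\<lambda>x. U x ^ 3 / 3) has_real_derivative (U x)^2 * D x) (at x within {0..1})"
      by (rule DERIV_cong) simp
    then show ?thesis by (simp add: has_real_derivative_iff_has_vector_derivative)
  qed
  have "((\<lambda>x. (U x)^2 * D x) has_integral (U 1 ^ 3 / 3 - U 0 ^ 3 / 3)) {0..1}"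
    by (rule fundamental_theorem_of_calculus) (auto intro: dC)
  moreover have "U 1 = U 0" unfolding U_def by (simp add: Wc_01)
  ultimately show ?thesis unfolding U_def D_def by (simp add: integral_unique)
qed

lemma integral_skew_zero:
  assumes ca: "(\<lambda>k. norm (c k)) summable_on UNIV" and sc: "symc c"
    and cq: "(\<lambda>k. norm (qc c k)) summable_on UNIV"
  shows "integral {0..1} (\<lambda>x. Re (Wc (qc c) x) * Re (Wc c x)) = 0"
proof -
  define V where "V x = Re (Wc (qc c) x)" for x
  have sq: "symc (qc c)" by (rule symc_qc[OF sc])
  have cV: "continuous_on {0..1} (\<lambda>x. complex_of_real (V x))"
    unfolding V_def by (intro continuous_intros Wc_cont[OF cq])
  have va: "(\<lambda>x. complex_of_real (V x)) absolutely_integrable_on {0..1}"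
    using absolutely_integrable_continuous[of 0 1 "\<lambda>x. complex_of_real (V x)"] cV by simp
  define S where "S = integral {0..1} (\<lambda>x. complex_of_real (V x) * Wc c x)"
  have h: "((\<lambda>k. c k * integral {0..1} (\<lambda>x. complex_of_real (V x) * ek k x)) has_sum S) UNIV"
    unfolding S_def by (rule termwise_integral[OF ca va])
  have fc: "integral {0..1} (\<lambda>x. complex_of_real (V x) * ek k x) = qc c (-k)" for k
  proof -
    have "fcoeff V (-k) = qc c (-k)" unfolding V_def by (rule fcoeff_Wc[OF cq sq])
    then show ?thesis using fcoeff_ek[of V "-k"] by (simp add: mult.commute)
  qed
  define \<tau> where "\<tau> k = c k * qc c (-k)" for k
  have ht: "(\<tau> has_sum S) UNIV" using h unfolding \<tau>_def fc .
  have odd: "\<tau> (-k) = - \<tau> k" for k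
    unfolding \<tau>_def qc_def dc_def by (simp add: field_simps)
  have "((\<lambda>k. \<tau> (-k)) has_sum S) UNIV"
    using ht by (subst has_sum_reindex_bij_betw[of uminus UNIV UNIV]) (auto intro!: bij_betwI[of _ _ _ uminus])
  then have "((\<lambda>k. - \<tau> k) has_sum S) UNIV" by (simp add: odd)
  then have "(\<tau> has_sum - S) UNIV" by (simp add: has_sum_uminus)
  then have "S = - S" using ht has_sum_unique by blast
  then have S0: "S = 0" by simp
  have int: "(\<lambda>x. V x * Re (Wc c x)) integrable_on {0..1}"
    unfolding V_def by (intro integrable_continuous_interval continuous_intros Wc_cont[OF cq] Wc_cont[OF ca])
  have "complex_of_real (integral {0..1} (\<lambda>x. V x * Re (Wc c x))) = S"
    unfolding S_def of_real_integral[OF int] by (simp add: Wc_real[OF sc])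
  then show ?thesis using S0 unfolding V_def by simp
qed



lemma key_identity:
  assumes s: "s > 3/2" and u: "in_Hs s u"
    and N: "negligible N"
    and eq: "\<And>x. x \<in> {0..1} - N \<Longrightarrow> w x + 3 / 2 * u x * Dx u x = Qop (Dx u) x"
  shows "integral {0..1} (\<lambda>x. w x * u x) = 0"
proof -
  define c where "c = fcoeff u"
  have ul: "in_L2T u" using u unfolding in_Hs_def by auto
  have ca: "(\<lambda>k. norm (c k)) summable_on UNIV"
    unfolding c_def by (rule Hs_coef_abs(1)[OF _ u]) (use s in simp)
  have cd: "(\<lambda>k. norm (dc c k)) summable_on UNIV"
    unfolding c_def by (rule dc_abs_summable[OF s u])
  have cq: "(\<lambda>k. norm (qc c k)) summable_on UNIV"
    unfolding c_def by (rule qc_abs_summable[OF s u])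
  have fD: "fcoeff (Dx u) = dc c" unfolding c_def using Dx_props(2)[OF s u] by auto
  have fQ: "fcoeff (Qop (Dx u)) = qc c" unfolding c_def using Q_props(2)[OF s u] by auto
  define U where "U x = Re (Wc c x)" for x
  define D where "D x = Re (Wc (dc c) x)" for x
  define V where "V x = Re (Wc (qc c) x)" for x
  have Nu: "negligible {x\<in>{0..1}. u x \<noteq> U x}"
    unfolding U_def c_def by (rule representation[OF ul]) (use ca in \<open>simp add: c_def\<close>)
  have ND: "negligible {x\<in>{0..1}. Dx u x \<noteq> D x}"
    using representation[OF Dx_props(1)[OF s u]] cd unfolding D_def fD by simp
  have NQ: "negligible {x\<in>{0..1}. Qop (Dx u) x \<noteq> V x}"
    using representation[OF Q_props(1)[OF s u]] cq unfolding V_def fQ by simp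
  define M where "M = N \<union> {x\<in>{0..1}. u x \<noteq> U x} \<union> {x\<in>{0..1}. Dx u x \<noteq> D x} \<union> {x\<in>{0..1}. Qop (Dx u) x \<noteq> V x}"
  have M: "negligible M" unfolding M_def using N Nu ND NQ by auto
  have pw: "w x * u x = V x * U x - 3 / 2 * ((U x)^2 * D x)" if x: "x \<in> {0..1} - M" for x
  proof -
    have "x \<in> {0..1} - N" and e1: "u x = U x" and e2: "Dx u x = D x" and e3: "Qop (Dx u) x = V x"
      using x unfolding M_def by auto
    then have wx: "w x = V x - 3 / 2 * U x * D x" using eq by force
    show ?thesis by (simp only: wx e1) (simp add: power2_eq_square algebra_simps)
  qed
  have cU: "continuous_on {0..1} U" unfolding U_def by (intro continuous_intros Wc_cont[OF ca])
  have cD: "continuous_on {0..1} D" unfolding D_def by (intro continuous_intros Wc_cont[OF cd])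
  have cV: "continuous_on {0..1} V" unfolding V_def by (intro continuous_intros Wc_cont[OF cq])
  have i1: "(\<lambda>x. V x * U x) integrable_on {0..1}"
    by (intro integrable_continuous_interval continuous_intros cU cV)
  have i2: "(\<lambda>x. 3 / 2 * ((U x)^2 * D x)) integrable_on {0..1}"
    by (intro integrable_continuous_interval continuous_intros cU cD)
  have "integral {0..1} (\<lambda>x. w x * u x) = integral {0..1} (\<lambda>x. V x * U x - 3 / 2 * ((U x)^2 * D x))"
    by (rule integral_spike[OF M]) (use pw in auto)
  also have "\<dots> = integral {0..1} (\<lambda>x. V x * U x) - 3 / 2 * integral {0..1} (\<lambda>x. (U x)^2 * D x)"
    by (simp only: integral_diff[OF i1 i2] integral_mult_right)
  also have "integral {0..1} (\<lambda>x. V x * U x) = 0"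
    unfolding V_def U_def by (rule integral_skew_zero[OF ca _ cq]) (simp add: c_def symc_fcoeff)
  also have "integral {0..1} (\<lambda>x. (U x)^2 * D x) = 0"
    unfolding U_def D_def by (rule integral_cube_zero[OF ca cd])
  finally show ?thesis by simp
qed



lemma in_Hs_diff:
  assumes "in_Hs r f" "in_Hs r g"
  shows "in_Hs r (\<lambda>x. f x - g x)"
  using in_Hs_lin[OF assms, of 1 "-1"] by simp

lemma in_Hs_quot:
  assumes "in_Hs r f" "in_Hs r g"
  shows "in_Hs r (\<lambda>x. f x / h - g x)"
proof -
  have "in_Hs r (\<lambda>x. (1 / h) * f x + (-1) * g x)" by (rule in_Hs_lin[OF assms])
  moreover have "(\<lambda>x. (1 / h) * f x + (-1) * g x) = (\<lambda>x. f x / h - g x)" by auto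
  ultimately show ?thesis by simp
qed

lemma energy_quot:
  fixes ut uy wt :: "real \<Rightarrow> real" and h r :: real
  assumes r: "r > 1/2" and ut: "in_Hs r ut" and uy: "in_Hs r uy" and wt: "in_Hs r wt"
    and h: "h \<noteq> 0"
    and key: "integral {0..1} (\<lambda>x. wt x * ut x) = 0"
  defines "\<Delta> \<equiv> (\<lambda>x. uy x - ut x)"
    and "D \<equiv> (\<lambda>x. (uy x - ut x) / h - wt x)"
  shows "\<bar>(integral {0..1} (\<lambda>x. (uy x)^2) - integral {0..1} (\<lambda>x. (ut x)^2)) / h\<bar>
    \<le> Kc r * (Hs_norm r wt * Hs_norm r \<Delta> + Hs_norm r D * Hs_norm r \<Delta> + 2 * (Hs_norm r D * Hs_norm r ut))"
proof -
  have \<Delta>H: "in_Hs r \<Delta>" unfolding \<Delta>_def by (rule in_Hs_diff[OF uy ut])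
  have DH: "in_Hs r D" unfolding D_def \<Delta>_def by (rule in_Hs_quot[OF in_Hs_diff[OF uy ut] wt])
  have sqy: "(\<lambda>x. (uy x)^2) integrable_on {0..1}" and sqt: "(\<lambda>x. (ut x)^2) integrable_on {0..1}"
    using uy ut unfolding in_Hs_def in_L2T_def by auto
  note p1 = Hs_prod[OF r wt \<Delta>H] and p2 = Hs_prod[OF r DH \<Delta>H]
    and p3 = Hs_prod[OF r wt ut] and p4 = Hs_prod[OF r DH ut]
  have pw: "(uy x)^2 - (ut x)^2 = h * (wt x * \<Delta> x + D x * \<Delta> x + 2 * (wt x * ut x) + 2 * (D x * ut x))" for x
  proof -
    have "\<Delta> x = h * (wt x + D x)" unfolding \<Delta>_def D_def using h by (simp add: field_simps)
    moreover have "(uy x)^2 - (ut x)^2 = \<Delta> x * (\<Delta> x + 2 * ut x)"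
      unfolding \<Delta>_def by (simp add: power2_eq_square algebra_simps)
    ultimately show ?thesis by (simp add: algebra_simps)
  qed
  have "integral {0..1} (\<lambda>x. (uy x)^2) - integral {0..1} (\<lambda>x. (ut x)^2)
      = integral {0..1} (\<lambda>x. (uy x)^2 - (ut x)^2)"
    by (rule integral_diff[OF sqy sqt, symmetric])
  also have "\<dots> = integral {0..1} (\<lambda>x. h * (wt x * \<Delta> x + D x * \<Delta> x + 2 * (wt x * ut x) + 2 * (D x * ut x)))"
    by (simp only: pw)
  also have "\<dots> = h * (integral {0..1} (\<lambda>x. wt x * \<Delta> x) + integral {0..1} (\<lambda>x. D x * \<Delta> x)
      + 2 * integral {0..1} (\<lambda>x. wt x * ut x) + 2 * integral {0..1} (\<lambda>x. D x * ut x))"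
    using p1(1) p2(1) p3(1) p4(1)
    by (simp add: integral_mult_right integral_add integrable_add integrable_on_mult_right)
  finally have e: "(integral {0..1} (\<lambda>x. (uy x)^2) - integral {0..1} (\<lambda>x. (ut x)^2)) / h =
      integral {0..1} (\<lambda>x. wt x * \<Delta> x) + integral {0..1} (\<lambda>x. D x * \<Delta> x)
      + 2 * integral {0..1} (\<lambda>x. D x * ut x)"
    using h key by simp
  have "\<bar>integral {0..1} (\<lambda>x. wt x * \<Delta> x) + integral {0..1} (\<lambda>x. D x * \<Delta> x)
      + 2 * integral {0..1} (\<lambda>x. D x * ut x)\<bar>
      \<le> \<bar>integral {0..1} (\<lambda>x. wt x * \<Delta> x)\<bar> + \<bar>integral {0..1} (\<lambda>x. D x * \<Delta> x)\<bar>
      + 2 * \<bar>integral {0..1} (\<lambda>x. D x * ut x)\<bar>" by linarith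
  also have "\<dots> \<le> Kc r * Hs_norm r wt * Hs_norm r \<Delta> + Kc r * Hs_norm r D * Hs_norm r \<Delta>
      + 2 * (Kc r * Hs_norm r D * Hs_norm r ut)"
    using p1(2) p2(2) p4(2) by linarith
  also have "\<dots> = Kc r * (Hs_norm r wt * Hs_norm r \<Delta> + Hs_norm r D * Hs_norm r \<Delta> + 2 * (Hs_norm r D * Hs_norm r ut))"
    by (simp add: algebra_simps)
  finally show ?thesis using e by simp
qed



lemma shift_tendsto:
  fixes g :: "real \<Rightarrow> real"
  assumes "(g \<longlongrightarrow> 0) (at 0 within {h. t + h \<in> S})"
  shows "((\<lambda>y. g (y - t)) \<longlongrightarrow> 0) (at t within S)"
proof (rule tendstoI)
  fix e :: real assume e: "e > 0"
  have "eventually (\<lambda>h. dist (g h) 0 < e) (at 0 within {h. t + h \<in> S})"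
    using assms e by (rule tendstoD)
  then obtain d where d: "d > 0" and P: "\<And>h. h \<in> {h. t + h \<in> S} \<Longrightarrow> h \<noteq> 0 \<and> dist h 0 < d \<Longrightarrow> dist (g h) 0 < e"
    unfolding eventually_at by blast
  show "eventually (\<lambda>y. dist (g (y - t)) 0 < e) (at t within S)"
    unfolding eventually_at
  proof (intro exI[of _ d] conjI ballI impI d)
    fix y assume y: "y \<in> S" "y \<noteq> t \<and> dist y t < d"
    show "dist (g (y - t)) 0 < e"
      by (rule P) (use y in \<open>auto simp: dist_real_def\<close>)
  qed
qed

lemma energy_const:
  assumes s: "s > 3/2" and sol: "FW_solution s u0 T0 u"
  shows "\<And>t. t \<in> {0..T0} \<Longrightarrow> integral {0..1} (\<lambda>x. (u t x)^2) = integral {0..1} (\<lambda>x. (u 0 x)^2)"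
proof -
  have H: "\<And>t. t \<in> {0..T0} \<Longrightarrow> in_Hs s (u t)"
    and C: "\<And>t. t \<in> {0..T0} \<Longrightarrow> ((\<lambda>\<tau>. Hs_norm s (\<lambda>x. u \<tau> x - u t x)) \<longlongrightarrow> 0) (at t within {0..T0})"
    using sol unfolding FW_solution_def by auto
  obtain w where W1: "\<And>t. t \<in> {0..T0} \<Longrightarrow> in_Hs (s - 1) (w t)"
    and W2: "\<And>t. t \<in> {0..T0} \<Longrightarrow> ((\<lambda>h. Hs_norm (s - 1) (\<lambda>x. (u (t + h) x - u t x) / h - w t x)) \<longlongrightarrow> 0)
                           (at 0 within {h. t + h \<in> {0..T0}})"
    and W4: "\<And>t. t \<in> {0..T0} \<Longrightarrow> AE x in lborel. w t x + 3 / 2 * u t x * Dx (u t) x = Qop (Dx (u t)) x"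
    using sol unfolding FW_solution_def by blast
  define r where "r = s - 1"
  have r: "r > 1/2" using s by (simp add: r_def)
  define E where "E t = integral {0..1} (\<lambda>x. (u t x)^2)" for t
  have key: "integral {0..1} (\<lambda>x. w t x * u t x) = 0" if t: "t \<in> {0..T0}" for t
  proof -
    obtain N where N: "N \<in> null_sets lborel"
      and sub: "{x \<in> space lborel. \<not> (w t x + 3 / 2 * u t x * Dx (u t) x = Qop (Dx (u t)) x)} \<subseteq> N"
      using W4[OF t] by (force simp: eventually_ae_filter)
    have nN: "negligible N" using N by (simp add: negligible_iff_null_sets null_sets_completionI)
    show ?thesis
      by (rule key_identity[OF s H[OF t] nN]) (use sub in auto)
  qed
  have deriv: "(E has_derivative (\<lambda>h. 0)) (at t within {0..T0})" if t: "t \<in> {0..T0}" for t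
  proof -
    define A where "A = Hs_norm r (w t)"
    define B where "B = Hs_norm r (u t)"
    define Nd where "Nd y = Hs_norm s (\<lambda>x. u y x - u t x)" for y
    define ND where "ND y = Hs_norm r (\<lambda>x. (u y x - u t x) / (y - t) - w t x)" for y
    define g where "g y = Kc r * (A * Nd y + ND y * Nd y + 2 * (ND y * B))" for y
    have lNd: "(Nd \<longlongrightarrow> 0) (at t within {0..T0})" unfolding Nd_def by (rule C[OF t])
    have lND: "(ND \<longlongrightarrow> 0) (at t within {0..T0})"
    proof -
      have "((\<lambda>y. Hs_norm (s - 1) (\<lambda>x. (u (t + (y - t)) x - u t x) / (y - t) - w t x)) \<longlongrightarrow> 0)
          (at t within {0..T0})"
        by (rule shift_tendsto[OF W2[OF t]])
      then show ?thesis unfolding ND_def r_def by simp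
    qed
    have lg: "(g \<longlongrightarrow> 0) (at t within {0..T0})"
    proof -
      have "(g \<longlongrightarrow> Kc r * (A * 0 + 0 * 0 + 2 * (0 * B))) (at t within {0..T0})"
        unfolding g_def by (intro tendsto_intros lNd lND)
      then show ?thesis by simp
    qed
    have ev: "eventually (\<lambda>y. norm ((1 / norm (y - t)) *\<^sub>R (E y - (E t + 0))) \<le> g y) (at t within {0..T0})"
      unfolding eventually_at
    proof (intro exI[of _ 1] conjI ballI impI)
      fix y assume y: "y \<in> {0..T0}" "y \<noteq> t \<and> dist y t < 1"
      have hy: "y - t \<noteq> 0" using y by simp
      have uy: "in_Hs s (u y)" by (rule H[OF y(1)])
      have ut: "in_Hs s (u t)" by (rule H[OF t])
      have uyr: "in_Hs r (u y)" and utr: "in_Hs r (u t)"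
        using in_Hs_mono(1)[OF uy, of r] in_Hs_mono(1)[OF ut, of r] by (auto simp: r_def)
      have wr: "in_Hs r (w t)" using W1[OF t] by (simp add: r_def)
      have bnd: "\<bar>(E y - E t) / (y - t)\<bar> \<le> Kc r * (A * Hs_norm r (\<lambda>x. u y x - u t x)
          + ND y * Hs_norm r (\<lambda>x. u y x - u t x) + 2 * (ND y * B))"
        unfolding E_def A_def B_def ND_def
        by (rule energy_quot[OF r utr uyr wr hy key[OF t]])
      have mono: "Hs_norm r (\<lambda>x. u y x - u t x) \<le> Nd y"
        unfolding Nd_def by (rule in_Hs_mono(2)[OF in_Hs_diff[OF uy ut]]) (simp add: r_def)
      have A0: "A \<ge> 0" and ND0: "ND y \<ge> 0" and B0: "B \<ge> 0"
        unfolding A_def ND_def B_def by (simp_all add: Hs_norm_nonneg)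
      have "Kc r * (A * Hs_norm r (\<lambda>x. u y x - u t x) + ND y * Hs_norm r (\<lambda>x. u y x - u t x) + 2 * (ND y * B))
          \<le> g y"
        unfolding g_def using mono A0 ND0 B0 Kc_nonneg[of r]
        by (intro mult_left_mono add_mono mult_left_mono order_refl) auto
      moreover have "norm ((1 / norm (y - t)) *\<^sub>R (E y - (E t + 0))) = \<bar>(E y - E t) / (y - t)\<bar>"
        by (simp add: abs_divide)
      ultimately show "norm ((1 / norm (y - t)) *\<^sub>R (E y - (E t + 0))) \<le> g y" using bnd by simp
    qed simp
    show ?thesis unfolding has_derivative_within
      by (intro conjI bounded_linear_zero Lim_null_comparison[OF ev lg])
  qed
  obtain c where c: "\<And>t. t \<in> {0..T0} \<Longrightarrow> E t = c"
    using has_derivative_zero_constant[OF convex_real_interval(5) deriv] by blast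
  fix t assume t: "t \<in> {0..T0}"
  then have "0 \<in> {0..T0}" by simp
  then show "integral {0..1} (\<lambda>x. (u t x)^2) = integral {0..1} (\<lambda>x. (u 0 x)^2)"
    using c[OF t] c[of 0] unfolding E_def by simp
qed


theorem mainTheorem2:
  fixes s :: real and u0 :: "real \<Rightarrow> real" and u :: "real \<Rightarrow> real \<Rightarrow> real" and T :: ereal
  assumes "s > 3 / 2"
    and "in_Hs s u0"
    and "T = life_span s u0"
    and "\<forall>T0. 0 < T0 \<and> ereal T0 < T \<longrightarrow> FW_solution s u0 T0 u"
  shows "\<forall>t. 0 \<le> t \<and> ereal t < T \<longrightarrow> L2T_norm (u t) \<le> exp t * L2T_norm u0"
proof (intro allI impI)
  fix t :: real assume t: "0 \<le> t \<and> ereal t < T"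
  then obtain z where z1: "ereal t < ereal z" and z2: "ereal z < T"
    using ereal_dense2 by blast
  have tz: "t < z" using z1 by simp
  have z0: "0 < z" using t tz by simp
  have sol: "FW_solution s u0 z u" using assms(4) z0 z2 by blast
  have u00: "u 0 = u0" using sol unfolding FW_solution_def by simp
  have "integral {0..1} (\<lambda>x. (u t x)^2) = integral {0..1} (\<lambda>x. (u 0 x)^2)"
    by (rule energy_const[OF assms(1) sol]) (use t tz in simp)
  then have eqn: "L2T_norm (u t) = L2T_norm u0" unfolding L2T_norm_def u00 by simp
  have "(\<lambda>x. (u0 x)^2) integrable_on {0..1}"
    using assms(2) unfolding in_Hs_def in_L2T_def by auto
  then have "integral {0..1} (\<lambda>x. (u0 x)^2) \<ge> 0" by (rule integral_nonneg) simp
  then have L0: "L2T_norm u0 \<ge> 0" unfolding L2T_norm_def by simp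
  have "1 \<le> exp t" using t by simp
  then have "1 * L2T_norm u0 \<le> exp t * L2T_norm u0" using L0 by (rule mult_right_mono)
  then show "L2T_norm (u t) \<le> exp t * L2T_norm u0" using eqn by simp
qed

end
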